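(* Assume Condition (C) and $\lambda/2<h<\lambda$. If $\eta\in\mathcal M_{n^+_c}$ contains a cluster of pluses whose shape is not a quasi-square with side lengths $l_c$ and $l_c-1$, then $\eta$ is not a minimizer of $H$ on $\mathcal M_{n^+_c}$.
   Context: Let $\Lambda=\{1,\dots,L\}^2$, $\mathcal X=\{-1,0,+1\}^\Lambda$, $\partial^-\Lambda$ the sites of $\Lambda$ with a nearest neighbour outside $\Lambda$. Hamiltonian: $H(\eta)=\frac J2\sum_{i,j\in\Lambda,|i-j|=1}[\eta(i)-\eta(j)]^2+J\sum_{i\in\partial^-\Lambda}\sum_{j\notin\Lambda,|i-j|=1}\eta(i)^2-\lambda\sum_{i}\eta(i)^2-h\sum_i\eta(i)$. Condition (C): $J$ sufficiently large compared to $\lambda,h>0$; $L>(2J/(\lambda-h))^3$; none of $\tfrac{2J}{\lambda+h},\tfrac{2J}{\lambda-h},\tfrac{2J+\lambda-h}{\lambda+h},\tfrac{J+\lambda+h}{h}$ is an integer. Let $l_c=\lfloor\frac{2J+\lambda-h}{2h}\rfloor+1$ and $n^+_c=l_c(l_c-1)$. $\mathcal M_n$ is the set of configurations with exactly $n$ sites of spin $+1$. Clusters of pluses are the maximal connected components of the union of the closed unit squares centred at sites with spin $+1$. A quasi-square is a rectangle (of sites) with side lengths $n$ and $n+1$. *)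

theory Defs
  imports "HOL-Analysis.Analysis"
begin

type_synonym site = "int \<times> int"

definition Lam :: "nat \<Rightarrow> site set" where
  "Lam L = {1..int L} \<times> {1..int L}"

definition nn :: "site \<Rightarrow> site \<Rightarrow> bool" where
  "nn i j \<longleftrightarrow> \<bar>fst i - fst j\<bar> + \<bar>snd i - snd j\<bar> = 1"

definition inner_bdry :: "nat \<Rightarrow> site set" where
  "inner_bdry L = {i \<in> Lam L. \<exists>j. j \<notin> Lam L \<and> nn i j}"

text \<open>Configurations: spins in {-1,0,+1} on Lambda (normalised to 0 outside Lambda,
  which carries no information).\<close>
definition configs :: "nat \<Rightarrow> (site \<Rightarrow> int) set" where
  "configs L = {\<eta>. (\<forall>i\<in>Lam L. \<eta> i \<in> {-1, 0, 1}) \<and> (\<forall>i. i \<notin> Lam L \<longrightarrow> \<eta> i = 0)}"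

definition Ham :: "nat \<Rightarrow> real \<Rightarrow> real \<Rightarrow> real \<Rightarrow> (site \<Rightarrow> int) \<Rightarrow> real" where
  "Ham L J lam h \<eta> =
     J / 2 * (\<Sum>p\<in>{(i, j). i \<in> Lam L \<and> j \<in> Lam L \<and> nn i j}.
                  (of_int (\<eta> (fst p)) - of_int (\<eta> (snd p)))\<^sup>2)
   + J * (\<Sum>i\<in>inner_bdry L. \<Sum>j\<in>{j. j \<notin> Lam L \<and> nn i j}. (of_int (\<eta> i))\<^sup>2)
   - lam * (\<Sum>i\<in>Lam L. (of_int (\<eta> i))\<^sup>2)
   - h * (\<Sum>i\<in>Lam L. of_int (\<eta> i))"

definition Mn :: "nat \<Rightarrow> nat \<Rightarrow> (site \<Rightarrow> int) set" where
  "Mn L n = {\<eta> \<in> configs L. card {i \<in> Lam L. \<eta> i = 1} = n}"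

definition is_minimizer_on :: "nat \<Rightarrow> real \<Rightarrow> real \<Rightarrow> real \<Rightarrow> (site \<Rightarrow> int) set \<Rightarrow> (site \<Rightarrow> int) \<Rightarrow> bool" where
  "is_minimizer_on L J lam h M \<eta> \<longleftrightarrow> \<eta> \<in> M \<and> (\<forall>\<xi>\<in>M. Ham L J lam h \<eta> \<le> Ham L J lam h \<xi>)"

definition usq :: "site \<Rightarrow> (real \<times> real) set" where
  "usq i = {x. \<bar>fst x - of_int (fst i)\<bar> \<le> 1/2 \<and> \<bar>snd x - of_int (snd i)\<bar> \<le> 1/2}"

definition plus_sites :: "nat \<Rightarrow> (site \<Rightarrow> int) \<Rightarrow> site set" where
  "plus_sites L \<eta> = {i \<in> Lam L. \<eta> i = 1}"

definition plus_region :: "nat \<Rightarrow> (site \<Rightarrow> int) \<Rightarrow> (real \<times> real) set" where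
  "plus_region L \<eta> = (\<Union>i\<in>plus_sites L \<eta>. usq i)"

definition clusters :: "nat \<Rightarrow> (site \<Rightarrow> int) \<Rightarrow> (real \<times> real) set set" where
  "clusters L \<eta> = {connected_component_set (plus_region L \<eta>) x | x. x \<in> plus_region L \<eta>}"

definition cluster_sites :: "nat \<Rightarrow> (site \<Rightarrow> int) \<Rightarrow> (real \<times> real) set \<Rightarrow> site set" where
  "cluster_sites L \<eta> C = {i \<in> plus_sites L \<eta>. usq i \<subseteq> C}"

definition site_rect :: "int \<Rightarrow> int \<Rightarrow> int \<Rightarrow> int \<Rightarrow> site set" where
  "site_rect a b m k = {a..a + m - 1} \<times> {b..b + k - 1}"

definition quasi_square_l :: "int \<Rightarrow> site set \<Rightarrow> bool" where
  "quasi_square_l l S \<longleftrightarrow> (\<exists>a b. S = site_rect a b l (l - 1) \<or> S = site_rect a b (l - 1) l)"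

definition l_c :: "real \<Rightarrow> real \<Rightarrow> real \<Rightarrow> int" where
  "l_c J lam h = \<lfloor>(2 * J + lam - h) / (2 * h)\<rfloor> + 1"

definition n_c_plus :: "real \<Rightarrow> real \<Rightarrow> real \<Rightarrow> nat" where
  "n_c_plus J lam h = nat (l_c J lam h * (l_c J lam h - 1))"

text \<open>The non-asymptotic part of Condition (C).\<close>
definition cond_C_rest :: "nat \<Rightarrow> real \<Rightarrow> real \<Rightarrow> real \<Rightarrow> bool" where
  "cond_C_rest L J lam h \<longleftrightarrow>
     0 < lam \<and> 0 < h \<and> real L > (2 * J / (lam - h)) ^ 3 \<and>
     2 * J / (lam + h) \<notin> \<int> \<and> 2 * J / (lam - h) \<notin> \<int> \<and>
     (2 * J + lam - h) / (lam + h) \<notin> \<int> \<and> (J + lam + h) / h \<notin> \<int>"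

end

theory Submission
  imports Defs
begin

definition Esum :: "(nat \<Rightarrow> int) \<Rightarrow> nat \<Rightarrow> nat \<Rightarrow> int" where
  "Esum f a b = (\<Sum>x\<in>{a..<b}. (f (Suc x) - f x)^2)"

lemma Esum_split: "a \<le> b \<Longrightarrow> b \<le> c \<Longrightarrow> Esum f a c = Esum f a b + Esum f b c"
  unfolding Esum_def by (simp add: sum.atLeastLessThan_concat)

lemma Esum_one: "Esum f a (Suc a) = (f (Suc a) - f a)^2"
  unfolding Esum_def by simp

lemma int_abs_le_sq: "\<bar>z::int\<bar> \<le> z^2"
proof (cases "z = 0")
  case False
  then have "1 \<le> \<bar>z\<bar>" by linarith
  then have "\<bar>z\<bar> * 1 \<le> \<bar>z\<bar> * \<bar>z\<bar>" by (intro mult_left_mono) auto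
  then show ?thesis by (simp add: power2_eq_square abs_mult_self_eq)
qed simp

lemma Esum_ge_abs: "a \<le> b \<Longrightarrow> Esum f a b \<ge> \<bar>f b - f a\<bar>"
proof (induction b rule: dec_induct)
  case base then show ?case by (simp add: Esum_def)
next
  case (step b)
  have "Esum f a (Suc b) = Esum f a b + Esum f b (Suc b)"
    using step Esum_split[of a b "Suc b" f] by simp
  moreover have "Esum f b (Suc b) \<ge> \<bar>f (Suc b) - f b\<bar>" using Esum_one int_abs_le_sq by metis
  ultimately show ?case using step by linarith
qed

lemma Esum_nonneg: "Esum f a b \<ge> 0"
  unfolding Esum_def by (intro sum_nonneg) simp

lemma Esum_const: "(\<And>x. a \<le> x \<Longrightarrow> x \<le> b \<Longrightarrow> f x = c) \<Longrightarrow> Esum f a b = 0"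
  unfolding Esum_def by (intro sum.neutral) auto

definition seqok :: "(nat \<Rightarrow> int) \<Rightarrow> nat \<Rightarrow> bool" where
  "seqok f L \<longleftrightarrow> f 0 = 0 \<and> f (Suc L) = 0 \<and> (\<forall>x. 1 \<le> x \<and> x \<le> L \<longrightarrow> f x \<in> {-1,0,1})"

lemma S2: assumes "seqok f L" "1 \<le> x" "x \<le> L" "f x \<noteq> 0"
  shows "Esum f 0 (Suc L) \<ge> 2"
proof -
  have "Esum f 0 (Suc L) = Esum f 0 x + Esum f x (Suc L)" using assms Esum_split[of 0 x "Suc L" f] by simp
  moreover have "Esum f 0 x \<ge> \<bar>f x - f 0\<bar>" "Esum f x (Suc L) \<ge> \<bar>f (Suc L) - f x\<bar>"
    using assms by (simp_all add: Esum_ge_abs)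
  moreover have "\<bar>f x\<bar> \<ge> 1" using assms(4) by linarith
  ultimately show ?thesis using assms(1) unfolding seqok_def by linarith
qed

lemma S3a: assumes "seqok f L" "1 \<le> a" "a < b" "b \<le> L" "f a = 1" "f b = -1"
  shows "Esum f 0 (Suc L) \<ge> 4"
proof -
  have "Esum f 0 (Suc L) = Esum f 0 a + Esum f a b + Esum f b (Suc L)"
    using assms Esum_split[of 0 a "Suc L" f] Esum_split[of a b "Suc L" f] by simp
  moreover have "Esum f 0 a \<ge> \<bar>f a - f 0\<bar>" "Esum f a b \<ge> \<bar>f b - f a\<bar>" "Esum f b (Suc L) \<ge> \<bar>f (Suc L) - f b\<bar>"
    using assms Esum_ge_abs[of 0 a f] Esum_ge_abs[of a b f] Esum_ge_abs[of b "Suc L" f] by auto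
  ultimately show ?thesis using assms unfolding seqok_def by linarith
qed

lemma seqok_neg: "seqok f L \<Longrightarrow> seqok (\<lambda>x. - f x) L"
  unfolding seqok_def by auto

lemma Esum_neg: "Esum (\<lambda>x. - f x) a b = Esum f a b"
  unfolding Esum_def by (intro sum.cong) (auto simp: power2_eq_square algebra_simps)

lemma S3: assumes "seqok f L" "1 \<le> a" "a \<le> L" "1 \<le> b" "b \<le> L" "f a = 1" "f b = -1"
  shows "Esum f 0 (Suc L) \<ge> 4"
proof (cases "a < b")
  case True then show ?thesis using S3a assms by blast
next
  case False
  then have "b < a" using assms by (cases "a = b") auto
  then have "Esum (\<lambda>x. - f x) 0 (Suc L) \<ge> 4"
    using S3a[OF seqok_neg[OF assms(1)], of b a] assms by simp
  then show ?thesis by (simp add: Esum_neg)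
qed

lemma S4a: assumes "seqok f L" "1 \<le> a" "a < b" "b \<le> L" "f a = 1" "f b = -1"
  and nz: "\<And>x. 1 \<le> x \<Longrightarrow> x \<le> L \<Longrightarrow> f x \<noteq> 0"
  shows "Esum f 0 (Suc L) \<ge> 5"
proof -
  define S where "S = {x. a \<le> x \<and> x < b \<and> f x = 1}"
  have finS: "finite S" unfolding S_def by (rule finite_subset[of _ "{..<b}"]) auto
  have aS: "a \<in> S" using assms unfolding S_def by auto
  define x where "x = Max S"
  have xS: "x \<in> S" unfolding x_def using finS aS Max_in by blast
  have xmax: "\<And>y. y \<in> S \<Longrightarrow> y \<le> x" unfolding x_def using finS Max_ge by blast
  have x1: "a \<le> x" "x < b" "f x = 1" using xS unfolding S_def by auto
  have fsx: "f (Suc x) = -1"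
  proof (cases "Suc x = b")
    case True then show ?thesis using assms by simp
  next
    case False
    then have "Suc x < b" using x1 by simp
    then have "f (Suc x) \<noteq> 1" using xmax[of "Suc x"] x1 unfolding S_def by auto
    moreover have "f (Suc x) \<in> {-1,0,1}" using assms(1) \<open>Suc x < b\<close> assms(4) unfolding seqok_def by auto
    moreover have "f (Suc x) \<noteq> 0" using nz[of "Suc x"] \<open>Suc x < b\<close> assms(4) by auto
    ultimately show ?thesis by auto
  qed
  have "Esum f 0 (Suc L) = Esum f 0 x + Esum f x (Suc x) + Esum f (Suc x) (Suc L)"
    using x1 assms Esum_split[of 0 x "Suc L" f] Esum_split[of x "Suc x" "Suc L" f] by simp
  moreover have "Esum f 0 x \<ge> \<bar>f x - f 0\<bar>" "Esum f (Suc x) (Suc L) \<ge> \<bar>f (Suc L) - f (Suc x)\<bar>"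
    using x1 assms Esum_ge_abs[of 0 x f] Esum_ge_abs[of "Suc x" "Suc L" f] by auto
  moreover have "Esum f x (Suc x) = 4" using Esum_one[of f x] x1 fsx by simp
  ultimately show ?thesis using assms x1 fsx unfolding seqok_def by linarith
qed

lemma S4: assumes "seqok f L" "1 \<le> a" "a \<le> L" "1 \<le> b" "b \<le> L" "f a = 1" "f b = -1"
  and nz: "\<And>x. 1 \<le> x \<Longrightarrow> x \<le> L \<Longrightarrow> f x \<noteq> 0"
  shows "Esum f 0 (Suc L) \<ge> 5"
proof (cases "a < b")
  case True then show ?thesis using S4a assms by blast
next
  case False
  then have "b < a" using assms by (cases "a = b") auto
  then have "Esum (\<lambda>x. - f x) 0 (Suc L) \<ge> 5"
    using S4a[OF seqok_neg[OF assms(1)], of b a] assms nz by simp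
  then show ?thesis by (simp add: Esum_neg)
qed

lemma S5: assumes "seqok f L" "1 \<le> x1" "x1 < x2" "x2 < x3" "x3 \<le> L" "f x1 = 1" "f x3 = 1" "f x2 \<noteq> 1"
  "1 \<le> m" "m \<le> L" "f m = -1"
  shows "Esum f 0 (Suc L) \<ge> 5"
proof -
  have "1 \<le> x2" "x2 \<le> L" using assms by auto
  then have v2: "f x2 \<in> {-1,0,1}" using assms(1) unfolding seqok_def by blast
  have e0: "f 0 = 0" "f (Suc L) = 0" using assms unfolding seqok_def by auto
  have "m \<noteq> x1" "m \<noteq> x3" using assms by auto
  then consider "m < x1" | "x1 < m \<and> m < x3" | "x3 < m" by linarith
  then show ?thesis
  proof cases
    case 1
    have "Esum f 0 (Suc L) = Esum f 0 m + Esum f m x1 + Esum f x1 x2 + Esum f x2 x3 + Esum f x3 (Suc L)"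
      using 1 assms Esum_split[of 0 m "Suc L" f] Esum_split[of m x1 "Suc L" f]
        Esum_split[of x1 x2 "Suc L" f] Esum_split[of x2 x3 "Suc L" f] by simp
    moreover have "Esum f 0 m \<ge> \<bar>f m - f 0\<bar>" "Esum f m x1 \<ge> \<bar>f x1 - f m\<bar>"
      "Esum f x1 x2 \<ge> \<bar>f x2 - f x1\<bar>" "Esum f x2 x3 \<ge> \<bar>f x3 - f x2\<bar>"
      "Esum f x3 (Suc L) \<ge> \<bar>f (Suc L) - f x3\<bar>"
      using 1 assms Esum_ge_abs[of 0 m f] Esum_ge_abs[of m x1 f] Esum_ge_abs[of x1 x2 f]
        Esum_ge_abs[of x2 x3 f] Esum_ge_abs[of x3 "Suc L" f] by auto
    ultimately show ?thesis using assms v2 e0 by auto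
  next
    case 2
    have "Esum f 0 (Suc L) = Esum f 0 x1 + Esum f x1 m + Esum f m x3 + Esum f x3 (Suc L)"
      using 2 assms Esum_split[of 0 x1 "Suc L" f] Esum_split[of x1 m "Suc L" f]
        Esum_split[of m x3 "Suc L" f] by simp
    moreover have "Esum f 0 x1 \<ge> \<bar>f x1 - f 0\<bar>" "Esum f x1 m \<ge> \<bar>f m - f x1\<bar>"
      "Esum f m x3 \<ge> \<bar>f x3 - f m\<bar>"
      "Esum f x3 (Suc L) \<ge> \<bar>f (Suc L) - f x3\<bar>"
      using 2 assms Esum_ge_abs[of 0 x1 f] Esum_ge_abs[of x1 m f] Esum_ge_abs[of m x3 f]
        Esum_ge_abs[of x3 "Suc L" f] by auto
    ultimately show ?thesis using assms v2 e0 by auto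
  next
    case 3
    have "Esum f 0 (Suc L) = Esum f 0 x1 + Esum f x1 x2 + Esum f x2 x3 + Esum f x3 m + Esum f m (Suc L)"
      using 3 assms Esum_split[of 0 x1 "Suc L" f] Esum_split[of x1 x2 "Suc L" f]
        Esum_split[of x2 x3 "Suc L" f] Esum_split[of x3 m "Suc L" f] by simp
    moreover have "Esum f 0 x1 \<ge> \<bar>f x1 - f 0\<bar>" "Esum f x1 x2 \<ge> \<bar>f x2 - f x1\<bar>"
      "Esum f x2 x3 \<ge> \<bar>f x3 - f x2\<bar>" "Esum f x3 m \<ge> \<bar>f m - f x3\<bar>"
      "Esum f m (Suc L) \<ge> \<bar>f (Suc L) - f m\<bar>"
      using 3 assms Esum_ge_abs[of 0 x1 f] Esum_ge_abs[of x1 x2 f] Esum_ge_abs[of x2 x3 f]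
        Esum_ge_abs[of x3 m f] Esum_ge_abs[of m "Suc L" f] by auto
    ultimately show ?thesis using assms v2 e0 by auto
  qed
qed

lemma nn_iff: "nn (x,y) j \<longleftrightarrow> j \<in> {(x+1,y),(x-1,y),(x,y+1),(x,y-1)}"
  by (cases j) (auto simp: nn_def abs_if split: if_splits)

lemma Lam_iff: "(x,y) \<in> Lam L \<longleftrightarrow> 1 \<le> x \<and> x \<le> int L \<and> 1 \<le> y \<and> y \<le> int L"
  by (auto simp: Lam_def)

lemma finite_Lam[simp]: "finite (Lam L)" by (simp add: Lam_def)

lemma nbr_sum: fixes x y :: int shows "(\<Sum>j\<in>{(x+1,y),(x-1,y),(x,y+1),(x,y-1)}. g j) = g (x+1,y) + g (x-1,y) + g (x,y+1) + (g (x,y-1)::int)"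
proof -
  have d: "(x+1,y) \<notin> {(x-1,y),(x,y+1),(x,y-1)}" "(x-1,y) \<notin> {(x,y+1),(x,y-1)}" "(x,y+1) \<notin> {(x,y-1)}"
    by auto
  show ?thesis by (simp only: sum.insert[OF _ d(1)] sum.insert[OF _ d(2)] sum.insert[OF _ d(3)] finite.intros) simp
qed

lemma configs_out: "\<eta> \<in> configs L \<Longrightarrow> i \<notin> Lam L \<Longrightarrow> \<eta> i = 0"
  by (cases i) (auto simp: configs_def)

definition hterm :: "nat \<Rightarrow> (site \<Rightarrow> int) \<Rightarrow> site \<Rightarrow> int" where
  "hterm L \<eta> i = (\<eta> i - \<eta> (fst i + 1, snd i))^2 + (if fst i = int L then (\<eta> i)^2 else 0)
      + (\<eta> i - \<eta> (fst i - 1, snd i))^2 + (if fst i = 1 then (\<eta> i)^2 else 0)"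

definition trp :: "(site \<Rightarrow> int) \<Rightarrow> site \<Rightarrow> int" where
  "trp \<eta> = (\<lambda>(x,y). \<eta> (y,x))"

lemma per_site:
  assumes "\<eta> \<in> configs L" "i \<in> Lam L"
  shows "(\<Sum>j\<in>{j\<in>Lam L. nn i j}. (\<eta> i - \<eta> j)^2) + 2 * (\<Sum>j\<in>{j. j \<notin> Lam L \<and> nn i j}. (\<eta> i)^2)
         = hterm L \<eta> i + hterm L (trp \<eta>) (snd i, fst i)"
proof -
  obtain x y where i: "i = (x,y)" by (cases i)
  let ?N = "{(x+1,y),(x-1,y),(x,y+1),(x,y-1)}"
  have s1: "{j\<in>Lam L. nn i j} = Lam L \<inter> ?N" using i nn_iff by auto
  have s2: "{j. j \<notin> Lam L \<and> nn i j} = ?N \<inter> {j. j \<notin> Lam L}" using i nn_iff by auto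
  have a: "(\<Sum>j\<in>{j\<in>Lam L. nn i j}. (\<eta> i - \<eta> j)^2) = (\<Sum>j\<in>?N. if j \<in> Lam L then (\<eta> i - \<eta> j)^2 else 0)"
    unfolding s1 by (subst Int_commute, rule sum.inter_restrict) simp
  have b: "(\<Sum>j\<in>{j. j \<notin> Lam L \<and> nn i j}. (\<eta> i)^2) = (\<Sum>j\<in>?N. if j \<notin> Lam L then (\<eta> i)^2 else 0)"
    unfolding s2 by (simp add: sum.inter_restrict)
  have ii: "1 \<le> x" "x \<le> int L" "1 \<le> y" "y \<le> int L" using assms(2) i Lam_iff by auto
  have out: "\<And>j. j \<notin> Lam L \<Longrightarrow> \<eta> j = 0" using configs_out assms(1) by blast
  have c1: "(x+1,y) \<in> Lam L \<longleftrightarrow> x \<noteq> int L" using ii Lam_iff by auto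
  have c2: "(x-1,y) \<in> Lam L \<longleftrightarrow> x \<noteq> 1" using ii Lam_iff by auto
  have c3: "(x,y+1) \<in> Lam L \<longleftrightarrow> y \<noteq> int L" using ii Lam_iff by auto
  have c4: "(x,y-1) \<in> Lam L \<longleftrightarrow> y \<noteq> 1" using ii Lam_iff by auto
  show ?thesis
    unfolding a b nbr_sum unfolding hterm_def trp_def i
    using c1 c2 c3 c4 out[of "(x+1,y)"] out[of "(x-1,y)"] out[of "(x,y+1)"] out[of "(x,y-1)"]
    by (auto simp: power2_eq_square algebra_simps)
qed

definition RowE :: "nat \<Rightarrow> (site \<Rightarrow> int) \<Rightarrow> int \<Rightarrow> int" where
  "RowE L \<eta> y = Esum (\<lambda>x. \<eta> (int x, y)) 0 (Suc L)"

lemma sum_int_ivl: "(\<Sum>x\<in>{1..int L}. g x) = (\<Sum>k\<in>{1..L}. g (int k))"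
proof -
  have "{1..int L} = int ` {1..L}" by (simp add: image_int_atLeastAtMost)
  then show ?thesis by (simp add: sum.reindex)
qed

lemma row_hterm:
  assumes "\<eta> \<in> configs L" "1 \<le> L" "1 \<le> y" "y \<le> int L"
  shows "(\<Sum>x\<in>{1..int L}. hterm L \<eta> (x,y)) = 2 * RowE L \<eta> y"
proof -
  define f where "f = (\<lambda>k::nat. \<eta> (int k, y))"
  have f0: "f 0 = 0" "f (Suc L) = 0" unfolding f_def using configs_out[OF assms(1)] Lam_iff by auto
  have "(\<Sum>x\<in>{1..int L}. hterm L \<eta> (x,y)) = (\<Sum>k\<in>{1..L}. hterm L \<eta> (int k,y))"
    by (rule sum_int_ivl)
  also have "\<dots> = (\<Sum>k\<in>{1..L}. (f k - f (Suc k))^2 + (if k = L then (f k)^2 else 0)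
       + (f k - f (k - 1))^2 + (if k = 1 then (f k)^2 else 0))"
  proof (rule sum.cong)
    fix k assume "k \<in> {1..L}"
    then have e: "int (k - 1) = int k - 1" "int (Suc k) = int k + 1" by auto
    show "hterm L \<eta> (int k,y) = (f k - f (Suc k))^2 + (if k = L then (f k)^2 else 0)
       + (f k - f (k - 1))^2 + (if k = 1 then (f k)^2 else 0)"
      unfolding hterm_def f_def e fst_conv snd_conv of_nat_eq_iff of_nat_eq_1_iff by (rule refl)
  qed simp
  also have "\<dots> = (\<Sum>k\<in>{1..L}. (f k - f (Suc k))^2) + (f L)^2 + (\<Sum>k\<in>{1..L}. (f k - f (k - 1))^2) + (f 1)^2"
  proof -
    have d1: "(\<Sum>k\<in>{1..L}. (if k = L then (f k)^2 else 0)) = (f L)^2" using assms(2) by (simp add: sum.delta')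
    have d2: "(\<Sum>k\<in>{1..L}. (if k = 1 then (f k)^2 else 0)) = (f 1)^2" using assms(2) by (simp add: sum.delta')
    show ?thesis unfolding sum.distrib d1 d2 by simp
  qed
  also have "(\<Sum>k\<in>{1..L}. (f k - f (Suc k))^2) = Esum f 1 (Suc L)"
    unfolding Esum_def by (intro sum.cong) (auto simp: power2_commute)
  also have "(\<Sum>k\<in>{1..L}. (f k - f (k - 1))^2) = Esum f 0 L"
  proof -
    have "(\<Sum>k\<in>{1..L}. (f k - f (k - 1))^2) = (\<Sum>k\<in>{0..<L}. (f (Suc k) - f k)^2)"
      by (rule sum.reindex_bij_witness[of _ Suc "\<lambda>k. k - 1"]) auto
    then show ?thesis unfolding Esum_def .
  qed
  finally have "(\<Sum>x\<in>{1..int L}. hterm L \<eta> (x,y)) = Esum f 1 (Suc L) + (f L)^2 + Esum f 0 L + (f 1)^2" .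
  moreover have "Esum f 0 (Suc L) = Esum f 0 1 + Esum f 1 (Suc L)" using assms Esum_split[of 0 1 "Suc L" f] by simp
  moreover have "Esum f 0 (Suc L) = Esum f 0 L + Esum f L (Suc L)" using assms Esum_split[of 0 L "Suc L" f] by simp
  moreover have "Esum f 0 1 = (f 1)^2" using Esum_one[of f 0] f0 by simp
  moreover have "Esum f L (Suc L) = (f L)^2" using Esum_one[of f L] f0 by simp
  ultimately show ?thesis unfolding RowE_def f_def[symmetric] by linarith
qed

lemma sum_Lam: "(\<Sum>i\<in>Lam L. g i) = (\<Sum>y\<in>{1..int L}. \<Sum>x\<in>{1..int L}. g (x,y))"
proof -
  have "(\<Sum>i\<in>Lam L. g i) = (\<Sum>x\<in>{1..int L}. \<Sum>y\<in>{1..int L}. g (x,y))"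
    unfolding Lam_def sum.cartesian_product by (simp add: case_prod_beta')
  also have "\<dots> = (\<Sum>y\<in>{1..int L}. \<Sum>x\<in>{1..int L}. g (x,y))" by (rule sum.swap)
  finally show ?thesis .
qed

lemma Lam_hterm:
  assumes "\<eta> \<in> configs L" "1 \<le> L"
  shows "(\<Sum>i\<in>Lam L. hterm L \<eta> i) = 2 * (\<Sum>y\<in>{1..int L}. RowE L \<eta> y)"
  unfolding sum_Lam sum_distrib_left using row_hterm[OF assms] by (intro sum.cong) auto

lemma trp_configs: "\<eta> \<in> configs L \<Longrightarrow> trp \<eta> \<in> configs L"
  unfolding configs_def trp_def Lam_def by auto

lemma sum_Lam_swap: "(\<Sum>i\<in>Lam L. g (snd i, fst i)) = (\<Sum>i\<in>Lam L. g i)"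
proof -
  have "Lam L = prod.swap ` Lam L" unfolding Lam_def by auto
  moreover have "inj_on prod.swap (Lam L)" by simp
  then have "(\<Sum>i\<in>prod.swap ` Lam L. g i) = (\<Sum>i\<in>Lam L. g (prod.swap i))"
    by (simp add: sum.reindex)
  ultimately show ?thesis by (simp add: prod.swap_def)
qed

lemma Ham_eq:
  assumes "\<eta> \<in> configs L" "1 \<le> L"
  shows "Ham L J lam h \<eta> = J * of_int (\<Sum>y\<in>{1..int L}. RowE L \<eta> y + RowE L (trp \<eta>) y)
     - lam * (\<Sum>i\<in>Lam L. (of_int (\<eta> i))\<^sup>2) - h * (\<Sum>i\<in>Lam L. of_int (\<eta> i))"
proof -
  define A where "A i = (\<Sum>j\<in>{j\<in>Lam L. nn i j}. (\<eta> i - \<eta> j)^2)" for i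
  define B where "B i = (\<Sum>j\<in>{j. j \<notin> Lam L \<and> nn i j}. (\<eta> i)^2)" for i
  have P2: "{(i, j). i \<in> Lam L \<and> j \<in> Lam L \<and> nn i j} = Sigma (Lam L) (\<lambda>i. {j\<in>Lam L. nn i j})" by auto
  have s1: "(\<Sum>p\<in>{(i, j). i \<in> Lam L \<and> j \<in> Lam L \<and> nn i j}. (of_int (\<eta> (fst p)) - of_int (\<eta> (snd p)))\<^sup>2)
      = (of_int (\<Sum>i\<in>Lam L. A i) :: real)"
  proof -
    have "(\<Sum>x\<in>Lam L. \<Sum>xa\<in>{j \<in> Lam L. nn x j}. (of_int (\<eta> x) - of_int (\<eta> xa))\<^sup>2 :: real)
        = (\<Sum>p\<in>(SIGMA i:Lam L. {j \<in> Lam L. nn i j}). (\<lambda>x xa. (of_int (\<eta> x) - of_int (\<eta> xa))\<^sup>2 :: real) (fst p) (snd p))"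
      using sum.Sigma[of "Lam L" "\<lambda>i. {j\<in>Lam L. nn i j}" "\<lambda>x xa. (of_int (\<eta> x) - of_int (\<eta> xa))^2 :: real"]
      by (simp add: case_prod_beta')
    then show ?thesis unfolding P2 A_def of_int_sum by simp
  qed
  have ib: "inner_bdry L \<subseteq> Lam L" unfolding inner_bdry_def by auto
  have Bz: "B i = 0" if "i \<in> Lam L - inner_bdry L" for i
  proof -
    have "{j. j \<notin> Lam L \<and> nn i j} = {}" using that unfolding inner_bdry_def by blast
    then show ?thesis unfolding B_def by (simp only: sum.empty)
  qed
  have s2: "(\<Sum>i\<in>inner_bdry L. \<Sum>j\<in>{j. j \<notin> Lam L \<and> nn i j}. (of_int (\<eta> i))\<^sup>2) = (of_int (\<Sum>i\<in>Lam L. B i) :: real)"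
  proof -
    have "(\<Sum>i\<in>inner_bdry L. B i) = (\<Sum>i\<in>Lam L. B i)"
      by (rule sum.mono_neutral_left) (use ib Bz in auto)
    moreover have "(\<Sum>i\<in>inner_bdry L. \<Sum>j\<in>{j. j \<notin> Lam L \<and> nn i j}. (of_int (\<eta> i))\<^sup>2) = (of_int (\<Sum>i\<in>inner_bdry L. B i) :: real)"
      unfolding B_def of_int_sum of_int_power ..
    ultimately show ?thesis by simp
  qed
  have s3: "(\<Sum>i\<in>Lam L. A i + 2 * B i) = 2 * (\<Sum>y\<in>{1..int L}. RowE L \<eta> y + RowE L (trp \<eta>) y)"
  proof -
    have "(\<Sum>i\<in>Lam L. A i + 2 * B i) = (\<Sum>i\<in>Lam L. hterm L \<eta> i + hterm L (trp \<eta>) (snd i, fst i))"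
      unfolding A_def B_def using per_site[OF assms(1)] by (intro sum.cong) auto
    also have "\<dots> = (\<Sum>i\<in>Lam L. hterm L \<eta> i) + (\<Sum>i\<in>Lam L. hterm L (trp \<eta>) i)"
      by (simp add: sum.distrib sum_Lam_swap[of "hterm L (trp \<eta>)"])
    also have "\<dots> = 2 * (\<Sum>y\<in>{1..int L}. RowE L \<eta> y) + 2 * (\<Sum>y\<in>{1..int L}. RowE L (trp \<eta>) y)"
      using Lam_hterm[OF assms] Lam_hterm[OF trp_configs[OF assms(1)] assms(2)] by simp
    finally show ?thesis by (simp add: sum.distrib)
  qed
  have "J / 2 * of_int (\<Sum>i\<in>Lam L. A i) + J * of_int (\<Sum>i\<in>Lam L. B i)
      = J / 2 * of_int (\<Sum>i\<in>Lam L. A i + 2 * B i)"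
    by (simp add: sum.distrib sum_distrib_left algebra_simps)
  also have "\<dots> = J * of_int (\<Sum>y\<in>{1..int L}. RowE L \<eta> y + RowE L (trp \<eta>) y)"
    unfolding s3 by simp
  finally have key: "J / 2 * of_int (\<Sum>i\<in>Lam L. A i) + J * of_int (\<Sum>i\<in>Lam L. B i)
      = J * of_int (\<Sum>y\<in>{1..int L}. RowE L \<eta> y + RowE L (trp \<eta>) y)" .
  show ?thesis unfolding Ham_def s1 s2 key[symmetric] ..
qed

definition Pl :: "nat \<Rightarrow> (site \<Rightarrow> int) \<Rightarrow> site set" where
  "Pl L \<eta> = {i\<in>Lam L. \<eta> i = 1}"
definition Zs :: "nat \<Rightarrow> (site \<Rightarrow> int) \<Rightarrow> site set" where
  "Zs L \<eta> = {i\<in>Lam L. \<eta> i = 0}"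

lemma rowseq_ok:
  assumes "\<eta> \<in> configs L" "1 \<le> y" "y \<le> int L"
  shows "seqok (\<lambda>x. \<eta> (int x, y)) L"
  using assms unfolding seqok_def configs_def Lam_def by auto

lemma RowE_nonneg: "RowE L \<eta> y \<ge> 0"
  unfolding RowE_def by (rule Esum_nonneg)

lemma int_idx: "x \<in> {1..int L} \<Longrightarrow> 1 \<le> nat x \<and> nat x \<le> L \<and> int (nat x) = x"
  by auto

lemma row_nonzero:
  assumes "\<eta> \<in> configs L" "1 \<le> y" "y \<le> int L" "x \<in> {1..int L}" "\<eta> (x,y) \<noteq> 0"
  shows "RowE L \<eta> y \<ge> 2"
  unfolding RowE_def using S2[OF rowseq_ok[OF assms(1-3)], of "nat x"] int_idx[OF assms(4)] assms(5) by auto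

lemma row_pm:
  assumes "\<eta> \<in> configs L" "1 \<le> y" "y \<le> int L" "a \<in> {1..int L}" "\<eta> (a,y) = 1"
    "b \<in> {1..int L}" "\<eta> (b,y) = -1"
  shows "RowE L \<eta> y \<ge> 4"
  unfolding RowE_def using S3[OF rowseq_ok[OF assms(1-3)], of "nat a" "nat b"] int_idx[OF assms(4)] int_idx[OF assms(6)] assms by auto

lemma row_nozero:
  assumes "\<eta> \<in> configs L" "1 \<le> y" "y \<le> int L" "a \<in> {1..int L}" "\<eta> (a,y) = 1"
    "b \<in> {1..int L}" "\<eta> (b,y) = -1" "\<And>x. x \<in> {1..int L} \<Longrightarrow> \<eta> (x,y) \<noteq> 0"
  shows "RowE L \<eta> y \<ge> 5"
proof -
  have nz: "\<And>x. 1 \<le> x \<Longrightarrow> x \<le> L \<Longrightarrow> \<eta> (int x, y) \<noteq> 0" using assms(8) by auto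
  show ?thesis
  unfolding RowE_def using S4[OF rowseq_ok[OF assms(1-3)], of "nat a" "nat b"] nz int_idx[OF assms(4)] int_idx[OF assms(6)] assms(5,7) by auto
qed

lemma row_convex:
  assumes "\<eta> \<in> configs L" "1 \<le> y" "y \<le> int L" "RowE L \<eta> y \<le> 4"
    "m \<in> {1..int L}" "\<eta> (m,y) = -1"
    "x1 \<in> {1..int L}" "x3 \<in> {1..int L}" "\<eta> (x1,y) = 1" "\<eta> (x3,y) = 1" "x1 < x2" "x2 < x3"
  shows "\<eta> (x2,y) = 1"
proof (rule ccontr)
  assume a: "\<eta> (x2,y) \<noteq> 1"
  have x2: "x2 \<in> {1..int L}" using assms by auto
  have "nat x1 < nat x2" "nat x2 < nat x3" using assms x2 by auto
  then have "Esum (\<lambda>x. \<eta> (int x, y)) 0 (Suc L) \<ge> 5"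
    using S5[OF rowseq_ok[OF assms(1-3)], of "nat x1" "nat x2" "nat x3" "nat m"]
      int_idx[OF assms(5)] int_idx[OF assms(7)] int_idx[OF assms(8)] int_idx[OF x2] assms a by auto
  then show False using assms(4) unfolding RowE_def by simp
qed

lemma arith_B:
  fixes r c tr tc k z n l :: int and J d SR SC :: real
  assumes d: "0 < d" "d < J" "d * l < 2*J + d" and l: "l \<ge> 2" "n = l*(l-1)" and nrc: "n \<le> r*c" "k \<le> r*c - n"
    and k: "0 \<le> k" "k \<le> tr" "tr \<le> r" "k \<le> tc" "tc \<le> c" "0 \<le> tr" "0 \<le> tc"
    and S: "SR \<ge> 3*r - tr" "SC \<ge> 3*c - tc" "z \<ge> tr + tc - k"
  shows "J*(SR+SC) + d*z \<ge> (2*J+d)*(2*l-1)"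
    and "J*(SR+SC) + d*z \<le> (2*J+d)*(2*l-1) \<Longrightarrow> r + c = 2*l-1 \<and> tr = r \<and> tc = c \<and> r*c = n"
proof -
  define s where "s = r + c"
  define t where "t = tr + tc"
  have rc4: "4*(r*c) \<le> s * s" unfolding s_def using zero_le_power2[of "r-c"] by (simp add: power2_eq_square algebra_simps)
  have s_ge: "s \<ge> 2*l - 1"
  proof (rule ccontr)
    assume "\<not> s \<ge> 2*l - 1"
    then have "s \<le> 2*l - 2" by simp
    moreover have "0 \<le> s" unfolding s_def using k by simp
    ultimately have "s * s \<le> (2*l-2) * (2*l-2)" by (simp add: mult_mono)
    then have "4*n \<le> (2*l-2) * (2*l-2)" using rc4 nrc by linarith
    then show False using l by (simp add: algebra_simps)
  qed
  have F1: "J*(SR+SC) + d*z \<ge> J*(3* s - t) + d*(t - k)"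
  proof -
    have "J*(SR+SC) \<ge> J*(3* s - t)" using S d unfolding s_def t_def by (intro mult_left_mono) auto
    moreover have "d*z \<ge> d*(t-k)" using S d unfolding t_def by (intro mult_left_mono) auto
    ultimately show ?thesis by linarith
  qed
  have ts: "t \<le> s" "2*k \<le> s" unfolding t_def s_def using k by auto
  have main: "J*(SR+SC) + d*z > (2*J+d)*(2*l-1)" if "s \<ge> 2*l"
  proof -
    have "J*(3* s - t) + d*(t - k) = 2*J* s + (J - d)*(s - t) + d* s - d*k" by (simp add: algebra_simps)
    moreover have "(J - d)*(s - t) \<ge> 0" using d ts by simp
    moreover have "d*k \<le> d* s/2" using d ts by simp
    ultimately have "J*(3* s - t) + d*(t - k) \<ge> (2*J + d/2)* s" by (simp add: algebra_simps)
    moreover have "(2*J + d/2)* s \<ge> (2*J + d/2)*(2*l)" using that d by (intro mult_left_mono) auto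
    moreover have "(2*J + d/2)*(2*l) > (2*J+d)*(2*l-1)"
    proof -
      have "(2*J + d/2)*(2*l) - (2*J+d)*(2*l-1) = 2*J + d - d*l" by (simp add: algebra_simps)
      then show ?thesis using d by linarith
    qed
    ultimately show ?thesis using F1 by linarith
  qed
  have eqcase: "k = 0 \<and> r*c = n \<and> J*(SR+SC) + d*z \<ge> (2*J+d)*(2*l-1) + (J - d)*(s - t)" if "s = 2*l - 1"
  proof -
    have "4*(r*c) \<le> (2*l-1) * (2*l-1)" using rc4 that by simp
    then have "r*c \<le> n" using l by (simp add: algebra_simps)
    then have k0: "k = 0" "r*c = n" using nrc k by auto
    have "J*(3* s - t) + d*(t - k) = (2*J+d)* s + (J - d)*(s - t)" using k0 by (simp add: algebra_simps)
    then show ?thesis using k0 F1 that by simp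
  qed
  show "J*(SR+SC) + d*z \<ge> (2*J+d)*(2*l-1)"
  proof (cases "s = 2*l - 1")
    case True
    have "(J - d)*(s - t) \<ge> 0" using d ts by simp
    then show ?thesis using eqcase[OF True] by linarith
  next
    case False then have "s \<ge> 2*l" using s_ge by simp
    then show ?thesis using main by (meson less_le)
  qed
  assume le: "J*(SR+SC) + d*z \<le> (2*J+d)*(2*l-1)"
  have s1: "s = 2*l - 1"
  proof (rule ccontr)
    assume "s \<noteq> 2*l - 1" then have "s \<ge> 2*l" using s_ge by simp
    then show False using main le by (meson not_le)
  qed
  have "(J - d)*(s - t) \<le> 0" using eqcase[OF s1] le by linarith
  moreover have "(J - d)*(s - t) > 0" if "s - t > 0"
    using that d by (intro mult_pos_pos) auto
  ultimately have "s - t \<le> 0" by (meson not_le)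
  then show "r + c = 2*l-1 \<and> tr = r \<and> tc = c \<and> r*c = n" using s1 eqcase[OF s1] k unfolding s_def t_def by auto
qed

lemma sum_ind: assumes "finite A" "W \<subseteq> A"
  shows "(\<Sum>y\<in>A. if y \<in> W then (c::int) else 0) = c * int (card W)"
proof -
  have "(\<Sum>y\<in>A. if y \<in> W then c else 0) = (\<Sum>y\<in>A \<inter> W. c)" by (rule sum.inter_restrict[symmetric]) (use assms in auto)
  also have "A \<inter> W = W" using assms by auto
  finally show ?thesis by simp
qed

definition Wr :: "nat \<Rightarrow> (site \<Rightarrow> int) \<Rightarrow> int set" where
  "Wr L \<eta> = {y\<in>{1..int L}. \<forall>x\<in>{1..int L}. \<eta> (x,y) = 0}"
definition Tr :: "nat \<Rightarrow> (site \<Rightarrow> int) \<Rightarrow> int set" where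
  "Tr L \<eta> = {y\<in>snd ` Pl L \<eta>. RowE L \<eta> y \<le> 4}"
definition hasminus :: "nat \<Rightarrow> (site \<Rightarrow> int) \<Rightarrow> int \<Rightarrow> bool" where
  "hasminus L \<eta> y \<longleftrightarrow> (\<exists>x\<in>{1..int L}. \<eta> (x,y) = -1)"

lemma finite_Pl[simp]: "finite (Pl L \<eta>)" unfolding Pl_def by simp
lemma finite_Zs[simp]: "finite (Zs L \<eta>)" unfolding Zs_def by simp
lemma Pl_sub: "Pl L \<eta> \<subseteq> Lam L" unfolding Pl_def by auto
lemma snd_Pl: "snd ` Pl L \<eta> \<subseteq> {1..int L}" unfolding Pl_def Lam_def by auto
lemma fst_Pl: "fst ` Pl L \<eta> \<subseteq> {1..int L}" unfolding Pl_def Lam_def by auto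

lemma rows_W:
  assumes "\<eta> \<in> configs L"
  shows "(\<Sum>y\<in>{1..int L}. RowE L \<eta> y - 2) \<ge> -2 * int (card (Wr L \<eta>))"
proof -
  have "(\<Sum>y\<in>{1..int L}. RowE L \<eta> y - 2) \<ge> (\<Sum>y\<in>{1..int L}. if y \<in> Wr L \<eta> then -2 else 0)"
  proof (rule sum_mono)
    fix y assume y: "y \<in> {1..int L}"
    show "(if y \<in> Wr L \<eta> then -2 else 0) \<le> RowE L \<eta> y - 2"
    proof (cases "y \<in> Wr L \<eta>")
      case True then show ?thesis using RowE_nonneg[of L \<eta> y] by simp
    next
      case False
      then obtain x where "x \<in> {1..int L}" "\<eta> (x,y) \<noteq> 0" using y unfolding Wr_def by auto
      then show ?thesis using row_nonzero[OF assms, of y x] y False by auto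
    qed
  qed
  also have "(\<Sum>y\<in>{1..int L}. if y \<in> Wr L \<eta> then -2 else 0) = -2 * int (card (Wr L \<eta>))"
    by (rule sum_ind) (auto simp: Wr_def)
  finally show ?thesis .
qed

lemma W_zeros:
  shows "int L * int (card (Wr L \<eta>)) \<le> int (card (Zs L \<eta>))"
proof -
  have "{1..int L} \<times> Wr L \<eta> \<subseteq> Zs L \<eta>" unfolding Wr_def Zs_def Lam_def by auto
  then have "card ({1..int L} \<times> Wr L \<eta>) \<le> card (Zs L \<eta>)" by (intro card_mono) auto
  then have "L * card (Wr L \<eta>) \<le> card (Zs L \<eta>)" by (simp add: card_cartesian_product)
  then show ?thesis by (metis of_nat_le_iff of_nat_mult)
qed

lemma rows_B:
  assumes "\<eta> \<in> configs L" "\<forall>y\<in>{1..int L}. hasminus L \<eta> y"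
  shows "(\<Sum>y\<in>{1..int L}. RowE L \<eta> y - 2) \<ge> 3 * int (card (snd ` Pl L \<eta>)) - int (card (Tr L \<eta>))"
proof -
  let ?R = "snd ` Pl L \<eta>"
  have "(\<Sum>y\<in>{1..int L}. RowE L \<eta> y - 2) \<ge> (\<Sum>y\<in>{1..int L}. (if y \<in> ?R then 3 else 0) + (if y \<in> Tr L \<eta> then -1 else 0))"
  proof (rule sum_mono)
    fix y assume y: "y \<in> {1..int L}"
    obtain m where m: "m \<in> {1..int L}" "\<eta> (m,y) = -1" using assms(2) y unfolding hasminus_def by blast
    show "(if y \<in> ?R then 3 else 0) + (if y \<in> Tr L \<eta> then -1 else 0) \<le> RowE L \<eta> y - 2"
    proof (cases "y \<in> ?R")
      case True
      then obtain a where a: "(a,y) \<in> Pl L \<eta>" by force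
      then have a': "a \<in> {1..int L}" "\<eta> (a,y) = 1" unfolding Pl_def Lam_def by auto
      have "RowE L \<eta> y \<ge> 4" using row_pm[OF assms(1), of y a m] a' m y by auto
      moreover have "y \<notin> Tr L \<eta> \<Longrightarrow> RowE L \<eta> y \<ge> 5" using True unfolding Tr_def by auto
      ultimately show ?thesis using True by auto
    next
      case False
      then have "y \<notin> Tr L \<eta>" unfolding Tr_def by auto
      moreover have "RowE L \<eta> y \<ge> 2" using row_nonzero[OF assms(1), of y m] m y by auto
      ultimately show ?thesis using False by auto
    qed
  qed
  also have "(\<Sum>y\<in>{1..int L}. (if y \<in> ?R then 3 else 0) + (if y \<in> Tr L \<eta> then -1 else 0))
     = 3 * int (card ?R) - int (card (Tr L \<eta>))"
    unfolding sum.distrib using snd_Pl[of L \<eta>]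
    by (subst sum_ind, simp, simp, subst sum_ind, simp, auto simp: Tr_def)
  finally show ?thesis .
qed

lemma T_zero:
  assumes "\<eta> \<in> configs L" "y \<in> Tr L \<eta>" "hasminus L \<eta> y"
  shows "\<exists>x\<in>{1..int L}. \<eta> (x,y) = 0"
proof (rule ccontr)
  assume nz: "\<not> ?thesis"
  obtain a where a: "(a,y) \<in> Pl L \<eta>" using assms(2) unfolding Tr_def by force
  then have a': "a \<in> {1..int L}" "\<eta> (a,y) = 1" "y \<in> {1..int L}" unfolding Pl_def Lam_def by auto
  obtain m where m: "m \<in> {1..int L}" "\<eta> (m,y) = -1" using assms(3) unfolding hasminus_def by auto
  have "RowE L \<eta> y \<ge> 5" using row_nozero[OF assms(1), of y a m] a' m nz by auto
  then show False using assms(2) unfolding Tr_def by auto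
qed

lemma A2_zeros:
  assumes "\<eta> \<in> configs L" "y \<in> {1..int L}" "\<not> hasminus L \<eta> y"
  shows "int L \<le> int (card (Pl L \<eta>)) + int (card (Zs L \<eta>))"
proof -
  have "(\<lambda>x. (x,y)) ` {1..int L} \<subseteq> Pl L \<eta> \<union> Zs L \<eta>"
  proof
    fix p assume "p \<in> (\<lambda>x. (x,y)) ` {1..int L}"
    then obtain x where x: "x \<in> {1..int L}" "p = (x,y)" by auto
    then have "(x,y) \<in> Lam L" using assms(2) unfolding Lam_def by auto
    then have "\<eta> (x,y) \<in> {-1,0,1}" using assms(1) unfolding configs_def by auto
    moreover have "\<eta> (x,y) \<noteq> -1" using assms(3) x unfolding hasminus_def by auto
    ultimately show "p \<in> Pl L \<eta> \<union> Zs L \<eta>" using \<open>(x,y) \<in> Lam L\<close> x unfolding Pl_def Zs_def by auto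
  qed
  then have "card ((\<lambda>x. (x,y)) ` {1..int L}) \<le> card (Pl L \<eta> \<union> Zs L \<eta>)" by (intro card_mono) auto
  moreover have "card ((\<lambda>x. (x,y)) ` {1..int L}) = L" by (subst card_image) (auto simp: inj_on_def)
  moreover have "card (Pl L \<eta> \<union> Zs L \<eta>) \<le> card (Pl L \<eta>) + card (Zs L \<eta>)" by (rule card_Un_le)
  ultimately show ?thesis by linarith
qed

lemma trp_trp[simp]: "trp (trp \<eta>) = \<eta>" unfolding trp_def by auto
lemma trp_app[simp]: "trp \<eta> (a,b) = \<eta> (b,a)" unfolding trp_def by auto

lemma Pl_trp: "Pl L (trp \<eta>) = prod.swap ` Pl L \<eta>"
  unfolding Pl_def Lam_def by (auto simp: image_iff)
lemma Zs_trp: "Zs L (trp \<eta>) = prod.swap ` Zs L \<eta>"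
  unfolding Zs_def Lam_def by (auto simp: image_iff)
lemma card_Pl_trp: "card (Pl L (trp \<eta>)) = card (Pl L \<eta>)"
  unfolding Pl_trp by (simp add: card_image)
lemma card_Zs_trp: "card (Zs L (trp \<eta>)) = card (Zs L \<eta>)"
  unfolding Zs_trp by (simp add: card_image)
lemma snd_Pl_trp: "snd ` Pl L (trp \<eta>) = fst ` Pl L \<eta>"
  unfolding Pl_trp by (simp add: image_image)

lemma convex_int_interval:
  fixes S :: "int set"
  assumes "finite S" "S \<noteq> {}"
    and cv: "\<And>x1 x2 x3. x1 \<in> S \<Longrightarrow> x3 \<in> S \<Longrightarrow> x1 < x2 \<Longrightarrow> x2 < x3 \<Longrightarrow> x2 \<in> S"
  shows "S = {Min S .. Min S + int (card S) - 1}"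
proof -
  have mi: "Min S \<in> S" and ma: "Max S \<in> S" using assms Min_in Max_in by auto
  have eq: "S = {Min S .. Max S}"
  proof
    show "S \<subseteq> {Min S .. Max S}" using assms(1) by (auto intro: Min_le Max_ge)
    show "{Min S .. Max S} \<subseteq> S"
    proof
      fix x assume x: "x \<in> {Min S .. Max S}"
      show "x \<in> S"
      proof (cases "x = Min S \<or> x = Max S")
        case True then show ?thesis using mi ma by auto
      next
        case False then have "Min S < x" "x < Max S" using x by auto
        then show ?thesis using cv[OF mi ma] by blast
      qed
    qed
  qed
  have "card S = nat (Max S - Min S + 1)" by (subst eq) simp
  moreover have "Min S \<le> Max S" using assms(1) ma by (intro Min_le)
  ultimately have "Max S = Min S + int (card S) - 1" by linarith
  then show ?thesis using eq by simp
qed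

lemma sum_two: "(\<Sum>y\<in>{1..int L}. (2::int)) = 2 * int L"
  by simp

lemma lower:
  fixes J d :: real and l :: int
  assumes cfg: "\<eta> \<in> configs L" "1 \<le> L"
    and d: "0 < d" "d < J" "d * l < 2*J + d" and l: "l \<ge> 2" "int (card (Pl L \<eta>)) = l*(l-1)"
    and N1: "d * L / 2 - 2*J > (2*J+d)*(2*l-1)" and N2: "d * (L - l*(l-1)) > (2*J+d)*(2*l-1)"
  shows "J * of_int ((\<Sum>y\<in>{1..int L}. RowE L \<eta> y + RowE L (trp \<eta>) y) - 4 * int L) + d * real (card (Zs L \<eta>))
           \<ge> (2*J+d)*(2*l-1)
    \<and> (J * of_int ((\<Sum>y\<in>{1..int L}. RowE L \<eta> y + RowE L (trp \<eta>) y) - 4 * int L) + d * real (card (Zs L \<eta>))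
           \<le> (2*J+d)*(2*l-1)
        \<longrightarrow> (\<exists>a b. Pl L \<eta> = site_rect a b l (l-1) \<or> Pl L \<eta> = site_rect a b (l-1) l))"
proof -
  define \<eta>' where "\<eta>' = trp \<eta>"
  have cfg': "\<eta>' \<in> configs L" unfolding \<eta>'_def using trp_configs[OF cfg(1)] .
  define SR where "SR = (\<Sum>y\<in>{1..int L}. RowE L \<eta> y - 2)"
  define SC where "SC = (\<Sum>y\<in>{1..int L}. RowE L \<eta>' y - 2)"
  define Z where "Z = real (card (Zs L \<eta>))"
  define F where "F = J * of_int ((\<Sum>y\<in>{1..int L}. RowE L \<eta> y + RowE L (trp \<eta>) y) - 4 * int L) + d * Z"
  define Fs where "Fs = (2*J+d)*(2*l-1)"
  have Fs_pos: "Fs > 0" unfolding Fs_def using d l by (intro mult_pos_pos) auto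
  have hs: "(\<Sum>y\<in>{1..int L}. RowE L \<eta> y + RowE L (trp \<eta>) y) - 4 * int L = SR + SC"
    unfolding SR_def SC_def \<eta>'_def sum_subtractf sum.distrib sum_two by simp
  have F_eq: "F = J * (SR + SC) + d * Z" unfolding F_def hs by simp
  have ZsZ: "card (Zs L \<eta>') = card (Zs L \<eta>)" unfolding \<eta>'_def by (rule card_Zs_trp)
  have PlP: "card (Pl L \<eta>') = card (Pl L \<eta>)" unfolding \<eta>'_def by (rule card_Pl_trp)
  have key: "F \<ge> Fs \<and> (F \<le> Fs \<longrightarrow> (\<exists>a b. Pl L \<eta> = site_rect a b l (l-1) \<or> Pl L \<eta> = site_rect a b (l-1) l))"
  proof (cases "Wr L \<eta> \<noteq> {} \<or> Wr L \<eta>' \<noteq> {}")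
    case True
    define wr where "wr = real (card (Wr L \<eta>))"
    define wc where "wc = real (card (Wr L \<eta>'))"
    have w1: "wr + wc \<ge> 1"
    proof -
      have "finite (Wr L \<eta>)" "finite (Wr L \<eta>')" unfolding Wr_def by (rule finite_subset[of _ "{1..int L}"], auto)+
      then have "card (Wr L \<eta>) \<ge> 1 \<or> card (Wr L \<eta>') \<ge> 1" using True by (auto simp: Suc_le_eq card_gt_0_iff)
      then show ?thesis unfolding wr_def wc_def by auto
    qed
    have "SR \<ge> -2 * int (card (Wr L \<eta>))" unfolding SR_def by (rule rows_W[OF cfg(1)])
    then have SRr: "real_of_int SR \<ge> -2 * wr" unfolding wr_def by linarith
    have "SC \<ge> -2 * int (card (Wr L \<eta>'))" unfolding SC_def by (rule rows_W[OF cfg'])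
    then have SCr: "real_of_int SC \<ge> -2 * wc" unfolding wc_def by linarith
    have "int L * int (card (Wr L \<eta>)) \<le> int (card (Zs L \<eta>))" by (rule W_zeros)
    then have Z1: "real L * wr \<le> Z" unfolding wr_def Z_def by (metis of_int_le_iff of_int_of_nat_eq of_nat_mult)
    have "int L * int (card (Wr L \<eta>')) \<le> int (card (Zs L \<eta>'))" by (rule W_zeros)
    then have Z2: "real L * wc \<le> Z" unfolding wc_def Z_def ZsZ by (metis of_int_le_iff of_int_of_nat_eq of_nat_mult)
    have "J * (SR + SC) \<ge> J * (-2 * (wr + wc))" using SRr SCr d by (intro mult_left_mono) auto
    moreover have "d * Z \<ge> d * (real L * (wr + wc) / 2)" using Z1 Z2 d by (intro mult_left_mono) (auto simp: algebra_simps)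
    ultimately have "F \<ge> (wr + wc) * (d * L / 2 - 2 * J)" unfolding F_eq by (simp add: algebra_simps)
    moreover have "(wr + wc) * (d * L / 2 - 2 * J) \<ge> 1 * (d * L / 2 - 2 * J)"
      using w1 N1 Fs_pos unfolding Fs_def by (intro mult_right_mono) auto
    then have "(wr + wc) * (d * L / 2 - 2 * J) \<ge> d * L / 2 - 2 * J" by simp
    ultimately have "F > Fs" using N1 unfolding Fs_def by linarith
    then show ?thesis by simp
  next
    case False
    then have W0: "Wr L \<eta> = {}" "Wr L \<eta>' = {}" by auto
    show ?thesis
    proof (cases "\<exists>y\<in>{1..int L}. \<not> hasminus L \<eta> y \<or> \<not> hasminus L \<eta>' y")
      case True
      then obtain y where y: "y \<in> {1..int L}" "\<not> hasminus L \<eta> y \<or> \<not> hasminus L \<eta>' y" by blast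
      have "int L \<le> int (card (Pl L \<eta>)) + int (card (Zs L \<eta>))"
        using y A2_zeros[OF cfg(1) y(1)] A2_zeros[OF cfg' y(1)] PlP ZsZ by auto
      then have Zb: "Z \<ge> real L - l*(l-1)" using l unfolding Z_def by linarith
      have "SR \<ge> 0" using rows_W[OF cfg(1)] W0 unfolding SR_def by simp
      moreover have "SC \<ge> 0" using rows_W[OF cfg'] W0 unfolding SC_def by simp
      ultimately have "J * (SR + SC) \<ge> 0" using d by simp
      moreover have "d * Z \<ge> d * (real L - l*(l-1))" using Zb d by (intro mult_left_mono) auto
      ultimately have "F > Fs" using N2 unfolding F_eq Fs_def by (simp add: algebra_simps)
      then show ?thesis by simp
    next
      case False
      then have hm: "\<forall>y\<in>{1..int L}. hasminus L \<eta> y" "\<forall>y\<in>{1..int L}. hasminus L \<eta>' y" by auto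

      define P where "P = Pl L \<eta>"
      define R where "R = snd ` P"
      define C where "C = fst ` P"
      have R'C: "snd ` Pl L \<eta>' = C" unfolding C_def P_def \<eta>'_def by (rule snd_Pl_trp)
      have finP: "finite P" unfolding P_def by simp
      have finR: "finite R" "finite C" unfolding R_def C_def using finP by auto
      have RL: "R \<subseteq> {1..int L}" unfolding R_def P_def by (rule snd_Pl)
      have CL: "C \<subseteq> {1..int L}" unfolding C_def P_def by (rule fst_Pl)
      have TrR: "Tr L \<eta> \<subseteq> R" unfolding Tr_def R_def P_def by auto
      have TcC: "Tr L \<eta>' \<subseteq> C" unfolding Tr_def R'C[symmetric] by auto
      have PCR: "P \<subseteq> C \<times> R" unfolding C_def R_def by force
      have SRb: "SR \<ge> 3 * int (card R) - int (card (Tr L \<eta>))" unfolding SR_def R_def P_def by (rule rows_B[OF cfg(1) hm(1)])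
      have SCb: "SC \<ge> 3 * int (card C) - int (card (Tr L \<eta>'))" unfolding SC_def R'C[symmetric] by (rule rows_B[OF cfg' hm(2)])
      define zr where "zr y = (SOME x. x \<in> {1..int L} \<and> \<eta> (x,y) = 0)" for y
      define zc where "zc x = (SOME k. k \<in> {1..int L} \<and> \<eta>' (k,x) = 0)" for x
      have zr: "zr y \<in> {1..int L} \<and> \<eta> (zr y, y) = 0" if "y \<in> Tr L \<eta>" for y
      proof -
        have "y \<in> {1..int L}" using that TrR RL by auto
        then have "\<exists>x. x \<in> {1..int L} \<and> \<eta> (x,y) = 0" using T_zero[OF cfg(1) that] hm(1) by auto
        then show ?thesis unfolding zr_def by (rule someI_ex)
      qed
      have zc: "zc x \<in> {1..int L} \<and> \<eta>' (zc x, x) = 0" if "x \<in> Tr L \<eta>'" for x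
      proof -
        have "x \<in> {1..int L}" using that TcC CL by auto
        then have "\<exists>k. k \<in> {1..int L} \<and> \<eta>' (k,x) = 0" using T_zero[OF cfg' that] hm(2) by auto
        then show ?thesis unfolding zc_def by (rule someI_ex)
      qed
      define Zr where "Zr = (\<lambda>y. (zr y, y)) ` Tr L \<eta>"
      define Zc where "Zc = (\<lambda>x. (x, zc x)) ` Tr L \<eta>'"
      have finT: "finite (Tr L \<eta>)" "finite (Tr L \<eta>')" using TrR TcC finR finite_subset by auto
      have cZr: "card Zr = card (Tr L \<eta>)" unfolding Zr_def by (rule card_image) (auto simp: inj_on_def)
      have cZc: "card Zc = card (Tr L \<eta>')" unfolding Zc_def by (rule card_image) (auto simp: inj_on_def)
      have ZrZ: "Zr \<subseteq> Zs L \<eta>"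
      proof
        fix p assume "p \<in> Zr"
        then obtain y where y: "y \<in> Tr L \<eta>" "p = (zr y, y)" unfolding Zr_def by auto
        then show "p \<in> Zs L \<eta>" using zr[OF y(1)] TrR RL unfolding Zs_def Lam_def by auto
      qed
      have ZcZ: "Zc \<subseteq> Zs L \<eta>"
      proof
        fix p assume "p \<in> Zc"
        then obtain x where x: "x \<in> Tr L \<eta>'" "p = (x, zc x)" unfolding Zc_def by auto
        then show "p \<in> Zs L \<eta>" using zc[OF x(1)] TcC CL unfolding Zs_def Lam_def \<eta>'_def by auto
      qed
      have finZ: "finite Zr" "finite Zc" using finT unfolding Zr_def Zc_def by auto
      have KD: "Zr \<inter> Zc \<subseteq> (C \<times> R) - P"
      proof
        fix p assume p: "p \<in> Zr \<inter> Zc"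
        then obtain y where y: "y \<in> Tr L \<eta>" "p = (zr y, y)" unfolding Zr_def by auto
        obtain x where x: "x \<in> Tr L \<eta>'" "p = (x, zc x)" using p unfolding Zc_def by auto
        have "p \<in> Zs L \<eta>" using p ZrZ by auto
        then have "p \<notin> P" unfolding Zs_def P_def Pl_def by auto
        moreover have "p \<in> C \<times> R" using x y TrR TcC by auto
        ultimately show "p \<in> (C \<times> R) - P" by auto
      qed
      define k where "k = int (card (Zr \<inter> Zc))"
      have k1: "k \<le> int (card (Tr L \<eta>))" unfolding k_def cZr[symmetric] using finZ by (simp add: card_mono)
      have k2: "k \<le> int (card (Tr L \<eta>'))" unfolding k_def cZc[symmetric] using finZ by (simp add: card_mono)
      have cCR: "card (C \<times> R) = card C * card R" by (rule card_cartesian_product)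
      have nP: "card P \<le> card C * card R" using PCR finR cCR card_mono[of "C \<times> R" P] by auto
      have k3: "k \<le> int (card R) * int (card C) - int (card P)"
      proof -
        have "card (Zr \<inter> Zc) \<le> card ((C \<times> R) - P)" using KD finR by (intro card_mono) auto
        also have "card ((C \<times> R) - P) = card (C \<times> R) - card P" using PCR finP by (intro card_Diff_subset) auto
        finally have "card (Zr \<inter> Zc) + card P \<le> card C * card R" using nP unfolding cCR by linarith
        then have "int (card (Zr \<inter> Zc)) + int (card P) \<le> int (card C) * int (card R)"
          by (metis of_nat_add of_nat_mult of_nat_le_iff)
        then show ?thesis unfolding k_def by (simp add: algebra_simps)
      qed
      have zb: "int (card (Zs L \<eta>)) \<ge> int (card (Tr L \<eta>)) + int (card (Tr L \<eta>')) - k"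
      proof -
        have "card (Zr \<union> Zc) + card (Zr \<inter> Zc) = card Zr + card Zc" using finZ by (rule card_Un_Int[symmetric])
        moreover have "card (Zr \<union> Zc) \<le> card (Zs L \<eta>)" using ZrZ ZcZ by (intro card_mono) auto
        ultimately show ?thesis unfolding k_def cZr cZc by linarith
      qed
      have trR: "card (Tr L \<eta>) \<le> card R" using TrR finR by (intro card_mono) auto
      have tcC: "card (Tr L \<eta>') \<le> card C" using TcC finR by (intro card_mono) auto
      have nP': "int (card P) = l*(l-1)" using l unfolding P_def by simp
      note AB = arith_B[of d J l "l*(l-1)" "int (card R)" "int (card C)" k "int (card (Tr L \<eta>))"
          "int (card (Tr L \<eta>'))" "of_int SR" "of_int SC" "int (card (Zs L \<eta>))"]
      have hyps: "0 < d" "d < J" "d * l < 2*J + d" "l \<ge> 2" "l*(l-1) = l*(l-1)"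
         "l*(l-1) \<le> int (card R) * int (card C)" "k \<le> int (card R) * int (card C) - l*(l-1)"
         "0 \<le> k" "k \<le> int (card (Tr L \<eta>))" "int (card (Tr L \<eta>)) \<le> int (card R)"
         "k \<le> int (card (Tr L \<eta>'))" "int (card (Tr L \<eta>')) \<le> int (card C)"
         "0 \<le> int (card (Tr L \<eta>))" "0 \<le> int (card (Tr L \<eta>'))"
         "real_of_int SR \<ge> 3 * int (card R) - int (card (Tr L \<eta>))"
         "real_of_int SC \<ge> 3 * int (card C) - int (card (Tr L \<eta>'))"
         "int (card (Zs L \<eta>)) \<ge> int (card (Tr L \<eta>)) + int (card (Tr L \<eta>')) - k"
        using d l nP nP' k1 k2 k3 trR tcC SRb SCb zb unfolding k_def
        by (auto simp: algebra_simps)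
      have Fz: "F = J * (of_int SR + of_int SC) + d * of_int (int (card (Zs L \<eta>)))" unfolding F_eq Z_def by simp
      have ge: "F \<ge> Fs" using AB(1)[OF hyps] unfolding Fz Fs_def .
      have rect: "\<exists>a b. Pl L \<eta> = site_rect a b l (l-1) \<or> Pl L \<eta> = site_rect a b (l-1) l" if le: "F \<le> Fs"
      proof -
        have eqs: "int (card R) + int (card C) = 2*l-1" "int (card (Tr L \<eta>)) = int (card R)"
          "int (card (Tr L \<eta>')) = int (card C)" "int (card R) * int (card C) = l*(l-1)"
          using AB(2)[OF hyps] le unfolding Fz Fs_def by auto

        have TrEq: "Tr L \<eta> = R" using card_subset_eq[OF finR(1) TrR] eqs(2) by simp
        have TcEq: "Tr L \<eta>' = C" using card_subset_eq[OF finR(2) TcC] eqs(3) by simp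
        have "int (card P) = int (card C * card R)" using nP' eqs(4) by (simp add: algebra_simps)
        then have "card P = card (C \<times> R)" using cCR by linarith
        then have PEq: "P = C \<times> R" using card_subset_eq[of "C \<times> R" P] finR PCR by auto
        have "int (card R) * int (card C) \<noteq> 0" using eqs(4) l by simp
        then have ne: "R \<noteq> {}" "C \<noteq> {}" by auto
        have Pm: "\<eta> (x,y) = 1" "x \<in> {1..int L}" "y \<in> {1..int L}" if "x \<in> C" "y \<in> R" for x y
        proof -
          have "(x,y) \<in> P" using that PEq by auto
          then show "\<eta> (x,y) = 1" "x \<in> {1..int L}" "y \<in> {1..int L}" unfolding P_def Pl_def Lam_def by auto
        qed
        have cvC: "x2 \<in> C" if "x1 \<in> C" "x3 \<in> C" "x1 < x2" "x2 < x3" for x1 x2 x3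
        proof -
          obtain y0 where y0: "y0 \<in> R" using ne by auto
          have y0L: "y0 \<in> {1..int L}" using y0 RL by auto
          have "RowE L \<eta> y0 \<le> 4" using y0 TrEq unfolding Tr_def by auto
          moreover obtain m where "m \<in> {1..int L}" "\<eta> (m,y0) = -1" using hm(1) y0L unfolding hasminus_def by blast
          ultimately have "\<eta> (x2,y0) = 1" using row_convex[OF cfg(1), of y0 m x1 x3 x2] y0L Pm[OF that(1) y0] Pm[OF that(2) y0] that
            by auto
          moreover have "x2 \<in> {1..int L}" using Pm[OF that(1) y0] Pm[OF that(2) y0] that by auto
          ultimately have "(x2,y0) \<in> P" using y0L unfolding P_def Pl_def Lam_def by auto
          then show ?thesis unfolding C_def by force
        qed
        have cvR: "y2 \<in> R" if "y1 \<in> R" "y3 \<in> R" "y1 < y2" "y2 < y3" for y1 y2 y3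
        proof -
          obtain x0 where x0: "x0 \<in> C" using ne by auto
          have x0L: "x0 \<in> {1..int L}" using x0 CL by auto
          have "RowE L \<eta>' x0 \<le> 4" using x0 TcEq unfolding Tr_def by auto
          moreover obtain m where "m \<in> {1..int L}" "\<eta>' (m,x0) = -1" using hm(2) x0L unfolding hasminus_def by blast
          ultimately have "\<eta>' (y2,x0) = 1" using row_convex[OF cfg', of x0 m y1 y3 y2] x0L Pm[OF x0 that(1)] Pm[OF x0 that(2)] that
            unfolding \<eta>'_def by auto
          then have "\<eta> (x0,y2) = 1" unfolding \<eta>'_def by simp
          moreover have "y2 \<in> {1..int L}" using Pm[OF x0 that(1)] Pm[OF x0 that(2)] that by auto
          ultimately have "(x0,y2) \<in> P" using x0L unfolding P_def Pl_def Lam_def by auto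
          then show ?thesis unfolding R_def by force
        qed
        have Ci: "C = {Min C .. Min C + int (card C) - 1}" using convex_int_interval[OF finR(2) ne(2)] cvC by blast
        have Ri: "R = {Min R .. Min R + int (card R) - 1}" using convex_int_interval[OF finR(1) ne(1)] cvR by blast
        have PR: "Pl L \<eta> = site_rect (Min C) (Min R) (int (card C)) (int (card R))"
          unfolding site_rect_def P_def[symmetric] PEq using Ci Ri by simp
        have "(int (card R) - l) * (int (card R) - (l - 1)) = 0"
        proof -
          have "int (card C) = 2*l - 1 - int (card R)" using eqs(1) by simp
          then have h: "int (card R) * (2*l - 1 - int (card R)) = l*(l-1)" using eqs(4) by simp
          show ?thesis using h by algebra
        qed
        then have "int (card R) = l \<or> int (card R) = l - 1" by auto
        then show ?thesis
        proof
          assume a: "int (card R) = l"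
          then have "int (card C) = l - 1" using eqs(1) by simp
          then show ?thesis using PR a by auto
        next
          assume a: "int (card R) = l - 1"
          then have "int (card C) = l" using eqs(1) by simp
          then show ?thesis using PR a by auto
        qed
      qed
      show ?thesis using ge rect by blast
    qed
  qed
  then show ?thesis unfolding F_def Fs_def Z_def by simp
qed

lemma site_pt:
  fixes lam h :: real
  assumes "\<eta> \<in> configs L" "i \<in> Lam L"
  shows "- lam * (of_int (\<eta> i))\<^sup>2 - h * of_int (\<eta> i)
     = (h - lam) + (lam - h) * (if \<eta> i = 0 then 1 else 0) - 2 * h * (if \<eta> i = 1 then 1 else (0::real))"
proof -
  have "\<eta> i \<in> {-1,0,1}" using assms unfolding configs_def by auto
  then show ?thesis by (auto simp: algebra_simps)
qed

lemma card_Lam: "card (Lam L) = L * L"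
  unfolding Lam_def by (simp add: card_cartesian_product)

lemma Ham_F:
  fixes J lam h :: real
  assumes "\<eta> \<in> configs L" "1 \<le> L"
  shows "Ham L J lam h \<eta> = (J * of_int ((\<Sum>y\<in>{1..int L}. RowE L \<eta> y + RowE L (trp \<eta>) y) - 4 * int L)
      + (lam - h) * real (card (Zs L \<eta>))) + (4 * L * J + (h - lam) * L * L - 2 * h * card (Pl L \<eta>))"
proof -
  have "- lam * (\<Sum>i\<in>Lam L. (of_int (\<eta> i))\<^sup>2) - h * (\<Sum>i\<in>Lam L. of_int (\<eta> i))
      = (\<Sum>i\<in>Lam L. - lam * (of_int (\<eta> i))\<^sup>2 - h * of_int (\<eta> i))"
    by (simp add: sum_distrib_left sum_subtractf)
  also have "\<dots> = (\<Sum>i\<in>Lam L. (h - lam) + (lam - h) * (if \<eta> i = 0 then 1 else 0) - 2 * h * (if \<eta> i = 1 then 1 else (0::real)))"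
    using site_pt[OF assms(1)] by (intro sum.cong) auto
  also have "\<dots> = (h - lam) * card (Lam L) + (lam - h) * card (Zs L \<eta>) - 2 * h * card (Pl L \<eta>)"
  proof -
    have "(\<Sum>i\<in>Lam L. (if \<eta> i = 0 then 1 else (0::real))) = card (Zs L \<eta>)"
      unfolding Zs_def by (subst sum.inter_filter[symmetric]) auto
    moreover have "(\<Sum>i\<in>Lam L. (if \<eta> i = 1 then 1 else (0::real))) = card (Pl L \<eta>)"
      unfolding Pl_def by (subst sum.inter_filter[symmetric]) auto
    ultimately show ?thesis by (simp add: sum.distrib sum_subtractf sum_distrib_left[symmetric])
  qed
  finally have st: "- lam * (\<Sum>i\<in>Lam L. (of_int (\<eta> i))\<^sup>2) - h * (\<Sum>i\<in>Lam L. of_int (\<eta> i))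
      = (h - lam) * (L * L) + (lam - h) * card (Zs L \<eta>) - 2 * h * card (Pl L \<eta>)" unfolding card_Lam by simp
  have "Ham L J lam h \<eta> = J * of_int (\<Sum>y\<in>{1..int L}. RowE L \<eta> y + RowE L (trp \<eta>) y)
     + (- lam * (\<Sum>i\<in>Lam L. (of_int (\<eta> i))\<^sup>2) - h * (\<Sum>i\<in>Lam L. of_int (\<eta> i)))"
    using Ham_eq[OF assms, of J lam h] by simp
  then show ?thesis unfolding st by (simp add: algebra_simps)
qed

lemma E2:
  assumes "p < L" "\<And>x. x \<le> p \<Longrightarrow> f x = 0" "\<And>x. p < x \<Longrightarrow> x \<le> L \<Longrightarrow> f x = w" "f (Suc L) = 0"
  shows "Esum f 0 (Suc L) = 2 * w^2"
proof -
  have "Esum f 0 (Suc L) = Esum f 0 p + Esum f p (Suc p) + Esum f (Suc p) L + Esum f L (Suc L)"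
    using assms Esum_split[of 0 p "Suc L" f] Esum_split[of p "Suc p" "Suc L" f] Esum_split[of "Suc p" L "Suc L" f] by simp
  moreover have "Esum f 0 p = 0" using assms by (intro Esum_const[where c=0]) auto
  moreover have "Esum f (Suc p) L = 0" using assms by (intro Esum_const[where c=w]) auto
  moreover have "Esum f p (Suc p) = w^2" using assms Esum_one[of f p] by simp
  moreover have "Esum f L (Suc L) = w^2" using assms Esum_one[of f L] by (simp add: power2_commute)
  ultimately show ?thesis by simp
qed

lemma E3:
  assumes "1 \<le> p" "Suc (Suc p) \<le> L" "f 0 = 0" "\<And>x. 1 \<le> x \<Longrightarrow> x \<le> p \<Longrightarrow> f x = u" "f (Suc p) = 0"
    "\<And>x. Suc p < x \<Longrightarrow> x \<le> L \<Longrightarrow> f x = w" "f (Suc L) = 0"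
  shows "Esum f 0 (Suc L) = 2 * u^2 + 2 * w^2"
proof -
  have "Esum f 0 (Suc L) = Esum f 0 1 + Esum f 1 p + Esum f p (Suc p) + Esum f (Suc p) (Suc (Suc p))
       + Esum f (Suc (Suc p)) L + Esum f L (Suc L)"
    using assms Esum_split[of 0 1 "Suc L" f] Esum_split[of 1 p "Suc L" f] Esum_split[of p "Suc p" "Suc L" f]
      Esum_split[of "Suc p" "Suc (Suc p)" "Suc L" f] Esum_split[of "Suc (Suc p)" L "Suc L" f] by simp
  moreover have "Esum f 1 p = 0" using assms by (intro Esum_const[where c=u]) auto
  moreover have "Esum f (Suc (Suc p)) L = 0" using assms by (intro Esum_const[where c=w]) auto
  moreover have "Esum f 0 1 = u^2" using assms Esum_one[of f 0] by simp
  moreover have "Esum f p (Suc p) = u^2" using assms Esum_one[of f p] by (simp add: power2_commute)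
  moreover have "Esum f (Suc p) (Suc (Suc p)) = w^2" using assms Esum_one[of f "Suc p"] by simp
  moreover have "Esum f L (Suc L) = w^2" using assms Esum_one[of f L] by (simp add: power2_commute)
  ultimately show ?thesis by simp
qed

definition canon :: "nat \<Rightarrow> int \<Rightarrow> site \<Rightarrow> int" where
  "canon L l = (\<lambda>(x,y). if (x,y) \<in> Lam L then
      (if 1 \<le> x \<and> x \<le> l \<and> 1 \<le> y \<and> y \<le> l - 1 then 1
       else if (x = l + 1 \<and> 1 \<le> y \<and> y \<le> l - 1) \<or> (1 \<le> x \<and> x \<le> l \<and> y = l) then 0 else -1) else 0)"

lemma canon_vals: "canon L l i \<in> {-1,0,1}"
  by (cases i) (simp add: canon_def)

lemma canon_out: "i \<notin> Lam L \<Longrightarrow> canon L l i = 0"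
  by (cases i) (simp add: canon_def)

lemma canon_configs: "canon L l \<in> configs L"
  unfolding configs_def using canon_vals canon_out by blast

lemma canon_Pl: assumes "l + 2 \<le> int L" shows "Pl L (canon L l) = {1..l} \<times> {1..l-1}"
proof (rule set_eqI)
  fix p show "p \<in> Pl L (canon L l) \<longleftrightarrow> p \<in> {1..l} \<times> {1..l-1}"
    using assms by (cases p) (auto simp: Pl_def canon_def Lam_def split: if_splits)
qed

lemma canon_Zs: assumes "l + 2 \<le> int L" "l \<ge> 2"
  shows "Zs L (canon L l) = {l+1} \<times> {1..l-1} \<union> {1..l} \<times> {l}"
proof (rule set_eqI)
  fix p show "p \<in> Zs L (canon L l) \<longleftrightarrow> p \<in> {l+1} \<times> {1..l-1} \<union> {1..l} \<times> {l}"
    using assms by (cases p) (auto simp: Zs_def canon_def Lam_def split: if_splits)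
qed

lemma canon_card_Pl: assumes "l + 2 \<le> int L" "l \<ge> 2" shows "int (card (Pl L (canon L l))) = l * (l - 1)"
  using assms by (simp add: canon_Pl card_cartesian_product)

lemma canon_card_Zs: assumes "l + 2 \<le> int L" "l \<ge> 2" shows "int (card (Zs L (canon L l))) = 2 * l - 1"
proof -
  have "card ({l+1} \<times> {1..l-1} \<union> {1..l} \<times> {l}) = card ({l+1} \<times> {1..l-1}) + card ({1..l} \<times> {l})"
    by (rule card_Un_disjoint) auto
  then show ?thesis using assms by (simp add: canon_Zs card_cartesian_product)
qed

lemma canon_row:
  assumes "l \<ge> 2" "l + 2 \<le> int L" "y \<in> {1..int L}"
  shows "RowE L (canon L l) y = (if y \<le> l - 1 then 4 else 2)"
proof -
  define f where "f = (\<lambda>x::nat. canon L l (int x, y))"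
  have fL: "f (Suc L) = 0" unfolding f_def canon_def Lam_def by simp
  have f0: "f 0 = 0" unfolding f_def canon_def Lam_def by simp
  consider "y \<le> l - 1" | "y = l" | "y > l" by linarith
  then show ?thesis
  proof cases
    case 1
    have "Esum f 0 (Suc L) = 2 * 1^2 + 2 * (-1)^2"
    proof (rule E3[where p="nat l"])
      show "1 \<le> nat l" "Suc (Suc (nat l)) \<le> L" "f 0 = 0" "f (Suc L) = 0" using assms f0 fL by auto
      show "\<And>x. 1 \<le> x \<Longrightarrow> x \<le> nat l \<Longrightarrow> f x = 1" using assms 1 unfolding f_def canon_def Lam_def by auto
      show "f (Suc (nat l)) = 0" using assms 1 unfolding f_def canon_def Lam_def by auto
      show "\<And>x. Suc (nat l) < x \<Longrightarrow> x \<le> L \<Longrightarrow> f x = -1" using assms 1 unfolding f_def canon_def Lam_def by auto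
    qed
    then show ?thesis using 1 unfolding RowE_def f_def by simp
  next
    case 2
    have "Esum f 0 (Suc L) = 2 * (-1)^2"
    proof (rule E2[where p="nat l"])
      show "nat l < L" "f (Suc L) = 0" using assms fL by auto
      show "\<And>x. x \<le> nat l \<Longrightarrow> f x = 0" using assms 2 unfolding f_def canon_def Lam_def by auto
      show "\<And>x. nat l < x \<Longrightarrow> x \<le> L \<Longrightarrow> f x = -1" using assms 2 unfolding f_def canon_def Lam_def by auto
    qed
    then show ?thesis using 2 unfolding RowE_def f_def by simp
  next
    case 3
    have "Esum f 0 (Suc L) = 2 * (-1)^2"
    proof (rule E2[where p=0])
      show "0 < L" "f (Suc L) = 0" using assms fL by auto
      show "\<And>x. x \<le> 0 \<Longrightarrow> f x = 0" using f0 by auto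
      show "\<And>x. 0 < x \<Longrightarrow> x \<le> L \<Longrightarrow> f x = -1" using assms 3 unfolding f_def canon_def Lam_def by auto
    qed
    then show ?thesis using 3 unfolding RowE_def f_def by simp
  qed
qed

lemma canon_col:
  assumes "l \<ge> 2" "l + 2 \<le> int L" "x \<in> {1..int L}"
  shows "RowE L (trp (canon L l)) x = (if x \<le> l then 4 else 2)"
proof -
  define f where "f = (\<lambda>k::nat. canon L l (x, int k))"
  have ff: "(\<lambda>k::nat. trp (canon L l) (int k, x)) = f" unfolding f_def by simp
  have fL: "f (Suc L) = 0" unfolding f_def canon_def Lam_def by simp
  have f0: "f 0 = 0" unfolding f_def canon_def Lam_def by simp
  consider "x \<le> l" | "x = l + 1" | "x > l + 1" by linarith
  then show ?thesis
  proof cases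
    case 1
    have "Esum f 0 (Suc L) = 2 * 1^2 + 2 * (-1)^2"
    proof (rule E3[where p="nat (l - 1)"])
      show "1 \<le> nat (l - 1)" "Suc (Suc (nat (l - 1))) \<le> L" "f 0 = 0" "f (Suc L) = 0" using assms f0 fL by auto
      show "\<And>k. 1 \<le> k \<Longrightarrow> k \<le> nat (l - 1) \<Longrightarrow> f k = 1" using assms 1 unfolding f_def canon_def Lam_def by auto
      show "f (Suc (nat (l - 1))) = 0" using assms 1 unfolding f_def canon_def Lam_def by auto
      show "\<And>k. Suc (nat (l - 1)) < k \<Longrightarrow> k \<le> L \<Longrightarrow> f k = -1" using assms 1 unfolding f_def canon_def Lam_def by auto
    qed
    then show ?thesis using 1 unfolding RowE_def ff by simp
  next
    case 2
    have "Esum f 0 (Suc L) = 2 * (-1)^2"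
    proof (rule E2[where p="nat (l - 1)"])
      show "nat (l - 1) < L" "f (Suc L) = 0" using assms fL by auto
      show "\<And>k. k \<le> nat (l - 1) \<Longrightarrow> f k = 0" using assms 2 unfolding f_def canon_def Lam_def by auto
      show "\<And>k. nat (l - 1) < k \<Longrightarrow> k \<le> L \<Longrightarrow> f k = -1" using assms 2 unfolding f_def canon_def Lam_def by auto
    qed
    then show ?thesis using 2 unfolding RowE_def ff by simp
  next
    case 3
    have "Esum f 0 (Suc L) = 2 * (-1)^2"
    proof (rule E2[where p=0])
      show "0 < L" "f (Suc L) = 0" using assms fL by auto
      show "\<And>k. k \<le> 0 \<Longrightarrow> f k = 0" using f0 by auto
      show "\<And>k. 0 < k \<Longrightarrow> k \<le> L \<Longrightarrow> f k = -1" using assms 3 unfolding f_def canon_def Lam_def by auto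
    qed
    then show ?thesis using 3 unfolding RowE_def ff by simp
  qed
qed

lemma canon_sum:
  assumes "l \<ge> 2" "l + 2 \<le> int L"
  shows "(\<Sum>y\<in>{1..int L}. RowE L (canon L l) y + RowE L (trp (canon L l)) y) - 4 * int L = 4 * l - 2"
proof -
  have "(\<Sum>y\<in>{1..int L}. RowE L (canon L l) y + RowE L (trp (canon L l)) y)
     = (\<Sum>y\<in>{1..int L}. 4 + (if y \<in> {1..l-1} then 2 else 0) + (if y \<in> {1..l} then 2 else 0))"
    using canon_row[OF assms] canon_col[OF assms] assms by (intro sum.cong) auto
  also have "\<dots> = 4 * int L + 2 * int (card {1..l-1}) + 2 * int (card {1..l})"
    unfolding sum.distrib using assms by (subst sum_ind, simp, simp, subst sum_ind, simp, auto)
  finally show ?thesis using assms by simp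
qed

lemma one_dim:
  fixes t :: real and a m :: int
  assumes "m \<ge> 1" "of_int a - 1/2 \<le> t" "t \<le> of_int (a + m - 1) + 1/2"
  shows "\<exists>x\<in>{a..a+m-1}. \<bar>t - of_int x\<bar> \<le> 1/2"
proof -
  define x where "x = min (a + m - 1) \<lfloor>t + 1/2\<rfloor>"
  have f1: "of_int \<lfloor>t + 1/2\<rfloor> \<le> t + 1/2" "t + 1/2 < of_int \<lfloor>t + 1/2\<rfloor> + 1" by linarith+
  have "a \<le> \<lfloor>t + 1/2\<rfloor>" using assms(2) by (simp add: le_floor_iff)
  then have xin: "x \<in> {a..a+m-1}" unfolding x_def using assms(1) by auto
  have "\<bar>t - of_int x\<bar> \<le> 1/2"
  proof (cases "\<lfloor>t + 1/2\<rfloor> \<le> a + m - 1")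
    case True
    then have "x = \<lfloor>t + 1/2\<rfloor>" unfolding x_def by simp
    then show ?thesis using f1 by linarith
  next
    case False
    then have "x = a + m - 1" unfolding x_def by simp
    moreover have "of_int (a + m) \<le> t + 1/2" using False f1 by (metis add_diff_cancel_right' floor_le_iff le_floor_iff linorder_not_le zle_diff1_eq)
    ultimately show ?thesis using assms(3) by simp
  qed
  then show ?thesis using xin by blast
qed

definition boxr :: "int \<Rightarrow> int \<Rightarrow> int \<Rightarrow> int \<Rightarrow> (real \<times> real) set" where
  "boxr a b m k = {of_int a - 1/2 .. of_int (a + m - 1) + 1/2} \<times> {of_int b - 1/2 .. of_int (b + k - 1) + 1/2}"

lemma usq_sub_box: assumes "i \<in> site_rect a b m k" shows "usq i \<subseteq> boxr a b m k"
proof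
  fix p assume p: "p \<in> usq i"
  obtain x y where i: "i = (x,y)" by (cases i)
  have xy: "a \<le> x" "x \<le> a + m - 1" "b \<le> y" "y \<le> b + k - 1" using assms i unfolding site_rect_def by auto
  have r: "(of_int a::real) \<le> of_int x" "(of_int x::real) \<le> of_int (a + m - 1)"
     "(of_int b::real) \<le> of_int y" "(of_int y::real) \<le> of_int (b + k - 1)" using xy by linarith+
  have q: "\<bar>fst p - of_int x\<bar> \<le> 1/2" "\<bar>snd p - of_int y\<bar> \<le> 1/2" using p i unfolding usq_def by auto
  have "fst p \<in> {of_int a - 1/2 .. of_int (a + m - 1) + 1/2}" using q(1) r(1,2) unfolding atLeastAtMost_iff abs_le_iff by linarith
  moreover have "snd p \<in> {of_int b - 1/2 .. of_int (b + k - 1) + 1/2}" using q(2) r(3,4) unfolding atLeastAtMost_iff abs_le_iff by linarith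
  ultimately show "p \<in> boxr a b m k" unfolding boxr_def by (simp add: mem_Times_iff)
qed

lemma union_box:
  assumes "m \<ge> 1" "k \<ge> 1"
  shows "(\<Union>i\<in>site_rect a b m k. usq i) = boxr a b m k"
proof
  show "(\<Union>i\<in>site_rect a b m k. usq i) \<subseteq> boxr a b m k" using usq_sub_box by blast
  show "boxr a b m k \<subseteq> (\<Union>i\<in>site_rect a b m k. usq i)"
  proof
    fix p assume "p \<in> boxr a b m k"
    then have p: "of_int a - 1/2 \<le> fst p" "fst p \<le> of_int (a + m - 1) + 1/2"
      "of_int b - 1/2 \<le> snd p" "snd p \<le> of_int (b + k - 1) + 1/2" unfolding boxr_def by auto
    obtain x where x: "x\<in>{a..a+m-1}" "\<bar>fst p - of_int x\<bar> \<le> 1/2" using one_dim[OF assms(1) p(1,2)] by blast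
    obtain y where y: "y\<in>{b..b+k-1}" "\<bar>snd p - of_int y\<bar> \<le> 1/2" using one_dim[OF assms(2) p(3,4)] by blast
    have "(x,y) \<in> site_rect a b m k" using x y unfolding site_rect_def by auto
    moreover have "p \<in> usq (x,y)" using x y unfolding usq_def by auto
    ultimately show "p \<in> (\<Union>i\<in>site_rect a b m k. usq i)" by blast
  qed
qed

lemma connected_box: "connected (boxr a b m k)"
  unfolding boxr_def by (intro convex_connected convex_Times) auto

lemma clusters_rect:
  assumes "plus_sites L \<eta> = site_rect a b m k" "m \<ge> 1" "k \<ge> 1" "C \<in> clusters L \<eta>"
  shows "cluster_sites L \<eta> C = site_rect a b m k"
proof -
  have pr: "plus_region L \<eta> = boxr a b m k" unfolding plus_region_def assms(1) using union_box[OF assms(2,3)] .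
  obtain x where x: "x \<in> plus_region L \<eta>" "C = connected_component_set (plus_region L \<eta>) x"
    using assms(4) unfolding clusters_def by auto
  have Cb: "C = boxr a b m k" using x connected_component_eq_self[OF connected_box] unfolding pr by auto
  show ?thesis unfolding cluster_sites_def assms(1) Cb using usq_sub_box[of _ a b m k] by blast
qed

lemma numeric:
  fixes lam h J :: real and L :: nat
  assumes h: "0 < h" "lam / 2 < h" "h < lam" and J: "J \<ge> h + 3 * (lam - h) + 1"
    and LL: "real L > (2 * J / (lam - h)) ^ 3"
  shows "l_c J lam h \<ge> 2" "lam - h < J" "(lam - h) * l_c J lam h < 2*J + (lam - h)"
    "(lam - h) * L / 2 - 2*J > (2*J + (lam - h)) * (2 * l_c J lam h - 1)"
    "(lam - h) * (L - l_c J lam h * (l_c J lam h - 1)) > (2*J + (lam - h)) * (2 * l_c J lam h - 1)"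
    "l_c J lam h + 2 \<le> int L" "1 \<le> L"
proof -
  define d where "d = lam - h"
  define l where "l = l_c J lam h"
  define Q where "Q = J / d"
  have d0: "0 < d" "d < h" using h unfolding d_def by auto
  have JQ: "J = Q * d" unfolding Q_def using d0 by simp
  have Q3: "Q \<ge> 3" unfolding Q_def using J d0 by (simp add: field_simps d_def)
  have fl: "real_of_int \<lfloor>(2 * J + lam - h) / (2 * h)\<rfloor> \<le> (2 * J + lam - h) / (2 * h)"
    "(2 * J + lam - h) / (2 * h) < real_of_int \<lfloor>(2 * J + lam - h) / (2 * h)\<rfloor> + 1" by linarith+
  have lr: "real_of_int l \<le> (2*J + d)/(2*h) + 1" "(2*J + d)/(2*h) < real_of_int l"
    using fl unfolding l_def l_c_def d_def by (simp_all add: algebra_simps)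
  have "(2*J + d)/(2*h) \<ge> 1" using J d0 h by (simp add: field_simps)
  then have l2: "l \<ge> 2" using lr by linarith
  have "(2*J + d)/(2*h) < (2*J + d)/(2*d)" using d0 J h by (intro divide_strict_left_mono) auto
  also have "(2*J + d)/(2*d) = Q + 1/2" unfolding JQ using d0 by (simp add: field_simps)
  finally have lQ: "real_of_int l < Q + 3/2" using lr by linarith
  have L8: "real L > 8 * Q^3"
  proof -
    have "(2 * J / (lam - h)) = 2 * Q" unfolding Q_def d_def by simp
    then show ?thesis using LL by (simp add: power_mult_distrib)
  qed
  have c2: "Q * Q \<ge> 3 * Q" using Q3 by (intro mult_right_mono) auto
  have "(Q * Q) * 3 \<le> (Q * Q) * Q" using Q3 by (intro mult_left_mono) auto
  then have c3: "Q * Q * Q \<ge> 3 * (Q * Q)" by (simp add: algebra_simps)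
  have L8': "real L > 8 * (Q * Q * Q)" using L8 by (simp add: power3_eq_cube)
  have e1: "(2*Q + 1) * (2*Q + 2) = 4 * (Q * Q) + 6 * Q + 2" by (simp add: algebra_simps)
  have e2: "(Q + 3/2) * (Q + 1/2) = Q * Q + 2 * Q + 3/4" by (simp add: algebra_simps field_simps)
  show "l_c J lam h \<ge> 2" using l2 unfolding l_def .
  show "lam - h < J" using J h(1) h(3) by argo
  have "d * real_of_int l \<le> d * ((2*J + d)/(2*h) + 1)" using lr d0 by (intro mult_left_mono) auto
  also have "\<dots> = d * (2*J + d)/(2*h) + d" by (simp add: algebra_simps)
  also have "d * (2*J + d)/(2*h) < 2 * J"
  proof -
    have "d * (2*J + d) < 4 * h * J"
    proof -
      have "d * (2*J + d) \<le> d * (2 * J + 2 * J)" using d0 J by (intro mult_left_mono) (auto simp: d_def)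
      also have "\<dots> = d * (4 * J)" by simp
      also have "\<dots> < h * (4 * J)"
      proof -
        have "J > 0" using J h(1) h(3) by argo
        then show ?thesis using d0 by (intro mult_strict_right_mono) auto
      qed
      finally show ?thesis by simp
    qed
    then show ?thesis using h by (simp add: field_simps)
  qed
  finally show "(lam - h) * l_c J lam h < 2*J + (lam - h)" unfolding d_def[symmetric] l_def[symmetric] by linarith
  have A: "(2*J + d) * (2 * real_of_int l - 1) \<le> d * ((2*Q + 1) * (2*Q + 2))"
  proof -
    have "(2*J + d) * (2 * real_of_int l - 1) \<le> (2*J + d) * (2*Q + 2)" using lQ d0 J
      by (intro mult_left_mono) (auto simp: d_def)
    also have "\<dots> = d * ((2*Q + 1) * (2*Q + 2))" unfolding JQ by (simp add: algebra_simps)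
    finally show ?thesis .
  qed
  have B: "d * ((2*Q + 1) * (2*Q + 2)) < d * real L / 2 - 2 * J"
  proof -
    have "(2*Q + 1) * (2*Q + 2) + 2*Q < real L / 2" unfolding e1 using L8' Q3 c2 c3 by linarith
    then have "d * ((2*Q + 1) * (2*Q + 2) + 2*Q) < d * (real L / 2)" using d0 by (intro mult_strict_left_mono) auto
    then show ?thesis unfolding JQ by (simp add: algebra_simps)
  qed
  show "(lam - h) * L / 2 - 2*J > (2*J + (lam - h)) * (2 * l_c J lam h - 1)"
    using A B unfolding d_def[symmetric] l_def[symmetric] by simp
  have ll: "real_of_int (l * (l - 1)) < (Q + 3/2) * (Q + 1/2)"
  proof -
    have "real_of_int l * (real_of_int l - 1) \<le> (Q + 3/2) * (real_of_int l - 1)" using lQ l2 by (intro mult_right_mono) auto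
    also have "\<dots> < (Q + 3/2) * (Q + 1/2)" using lQ Q3 by (intro mult_strict_left_mono) auto
    finally show ?thesis by simp
  qed
  have C: "d * ((2*Q + 1) * (2*Q + 2)) < d * (real L - real_of_int (l * (l - 1)))"
  proof -
    have "(2*Q + 1) * (2*Q + 2) < real L - (Q + 3/2) * (Q + 1/2)" unfolding e1 e2 using L8' Q3 c2 c3 by linarith
    then show ?thesis using ll d0 by (intro mult_strict_left_mono) auto
  qed
  show "(lam - h) * (L - l_c J lam h * (l_c J lam h - 1)) > (2*J + (lam - h)) * (2 * l_c J lam h - 1)"
    using A C unfolding d_def[symmetric] l_def[symmetric] by simp
  have "real L > Q + 4" using L8' Q3 c2 c3 by linarith
  then have "real_of_int (l + 2) < real L" using lQ by simp
  then show "l_c J lam h + 2 \<le> int L" unfolding l_def by linarith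
  then show "1 \<le> L" using l2 unfolding l_def by linarith
qed

theorem lemma4p10:
  fixes lam h :: real
  assumes "0 < h" and "lam / 2 < h" and "h < lam"
  shows "\<exists>J0. \<forall>J L \<eta>. J \<ge> J0 \<longrightarrow> cond_C_rest L J lam h \<longrightarrow>
            \<eta> \<in> Mn L (n_c_plus J lam h) \<longrightarrow>
            (\<exists>C\<in>clusters L \<eta>. \<not> quasi_square_l (l_c J lam h) (cluster_sites L \<eta> C)) \<longrightarrow>
            \<not> is_minimizer_on L J lam h (Mn L (n_c_plus J lam h)) \<eta>"
proof (intro exI[of _ "h + 3*(lam-h) + 1"] allI impI)
  fix J L \<eta>
  assume J: "J \<ge> h + 3*(lam-h) + 1" and cC: "cond_C_rest L J lam h" and eM: "\<eta> \<in> Mn L (n_c_plus J lam h)"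
    and bad: "\<exists>C\<in>clusters L \<eta>. \<not> quasi_square_l (l_c J lam h) (cluster_sites L \<eta> C)"
  define l where "l = l_c J lam h"
  have LL: "real L > (2 * J / (lam - h)) ^ 3" using cC unfolding cond_C_rest_def by auto
  note nm = numeric[OF assms J LL, folded l_def]
  have nc: "int (n_c_plus J lam h) = l * (l - 1)" unfolding n_c_plus_def l_def[symmetric] using nm(1) by simp
  have cfg: "\<eta> \<in> configs L" and cP: "int (card (Pl L \<eta>)) = l * (l - 1)"
    using eM nc unfolding Mn_def Pl_def by auto
  define \<xi> where "\<xi> = canon L l"
  have xcfg: "\<xi> \<in> configs L" unfolding \<xi>_def by (rule canon_configs)
  have xP: "int (card (Pl L \<xi>)) = l * (l - 1)" unfolding \<xi>_def by (rule canon_card_Pl) (use nm in auto)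
  have xZ: "int (card (Zs L \<xi>)) = 2 * l - 1" unfolding \<xi>_def by (rule canon_card_Zs) (use nm in auto)
  have xS: "(\<Sum>y\<in>{1..int L}. RowE L \<xi> y + RowE L (trp \<xi>) y) - 4 * int L = 4 * l - 2"
    unfolding \<xi>_def by (rule canon_sum) (use nm in auto)
  have xM: "\<xi> \<in> Mn L (n_c_plus J lam h)"
  proof -
    have "card {i \<in> Lam L. \<xi> i = 1} = n_c_plus J lam h" using xP nc unfolding Pl_def by linarith
    then show ?thesis using xcfg unfolding Mn_def by auto
  qed
  show "\<not> is_minimizer_on L J lam h (Mn L (n_c_plus J lam h)) \<eta>"
  proof
    assume "is_minimizer_on L J lam h (Mn L (n_c_plus J lam h)) \<eta>"
    then have le: "Ham L J lam h \<eta> \<le> Ham L J lam h \<xi>" using xM unfolding is_minimizer_on_def by auto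
    have cPP: "card (Pl L \<eta>) = card (Pl L \<xi>)" using cP xP by linarith
    define F where "F = J * of_int ((\<Sum>y\<in>{1..int L}. RowE L \<eta> y + RowE L (trp \<eta>) y) - 4 * int L)
      + (lam - h) * real (card (Zs L \<eta>))"
    have "F \<le> J * of_int (4 * l - 2) + (lam - h) * real (card (Zs L \<xi>))"
      using le Ham_F[OF cfg nm(7), of J lam h] Ham_F[OF xcfg nm(7), of J lam h] cPP xS unfolding F_def by simp
    also have "\<dots> = (2*J + (lam - h)) * (2*l - 1)"
    proof -
      have "real (card (Zs L \<xi>)) = of_int (2 * l - 1)" using xZ by (metis of_int_of_nat_eq)
      then show ?thesis by (simp only:) (simp add: algebra_simps)
    qed
    finally have Fle: "F \<le> (2*J + (lam - h)) * (2*l - 1)" .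
    have d0: "0 < lam - h" using assms by simp
    note low = lower[OF cfg nm(7) d0 nm(2) nm(3) nm(1) cP nm(4) nm(5)]
    then obtain a b where ab: "Pl L \<eta> = site_rect a b l (l-1) \<or> Pl L \<eta> = site_rect a b (l-1) l"
      using Fle unfolding F_def by blast
    have ps: "plus_sites L \<eta> = Pl L \<eta>" unfolding plus_sites_def Pl_def ..
    obtain C where C: "C \<in> clusters L \<eta>" "\<not> quasi_square_l l (cluster_sites L \<eta> C)" using bad unfolding l_def by blast
    have "quasi_square_l l (cluster_sites L \<eta> C)"
      using ab
    proof
      assume "Pl L \<eta> = site_rect a b l (l-1)"
      then have "cluster_sites L \<eta> C = site_rect a b l (l-1)" using clusters_rect[of L \<eta> a b l "l-1" C] ps C(1) nm(1) by auto
      then show ?thesis unfolding quasi_square_l_def by blast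
    next
      assume "Pl L \<eta> = site_rect a b (l-1) l"
      then have "cluster_sites L \<eta> C = site_rect a b (l-1) l" using clusters_rect[of L \<eta> a b "l-1" l C] ps C(1) nm(1) by auto
      then show ?thesis unfolding quasi_square_l_def by blast
    qed
    then show False using C(2) by simp
  qed
qed

end
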